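(* For every channel $T:\mathcal{B}(\mathcal{H}_2)\to\mathcal{B}(\mathcal{H}_1)$, $\lim_{\varepsilon\to0}Q_\varepsilon(T)=Q(T)$.
   Context: A channel is a completely positive unital linear map $T:\mathcal{B}(\mathcal{H}_2)\to\mathcal{B}(\mathcal{H}_1)$ between finite-dimensional Hilbert space operator algebras. The cb-norm of a linear map $S:\mathcal{B}(\mathcal{K}_2)\to\mathcal{B}(\mathcal{K}_1)$ is $\|S\|_{cb}=\sup\{\|(S\otimes\mathrm{id}_{\mathcal{B}(\mathbb{C}^j)})(A)\|:j\in\mathbb{N},\ A\in\mathcal{B}(\mathcal{K}_2\otimes\mathbb{C}^j),\ \|A\|\le1\}$. For a positive integer $M$, $\Delta(T,M)=\inf_{E,D}\|ETD-\mathrm{id}_{\mathcal{B}(\mathcal{H}_0)}\|_{cb}$ with $\dim\mathcal{H}_0=M$, over channels $D:\mathcal{B}(\mathcal{H}_0)\to\mathcal{B}(\mathcal{H}_2)$, $E:\mathcal{B}(\mathcal{H}_1)\to\mathcal{B}(\mathcal{H}_0)$. A number $c\ge0$ is an achievable rate if $\lim_{n\to\infty}\Delta(T^{\otimes n},\lfloor2^{cn}\rfloor)=0$; the quantum capacity $Q(T)$ is the supremum of all achievable rates. For $\varepsilon>0$, $Q_\varepsilon(T)$ is defined in the same way except that $c\ge0$ is required only to satisfy $\Delta(T^{\otimes n},2^{\lfloor cn\rfloor})\le\varepsilon$ for all sufficiently large $n$. *)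

theory Defs
  imports "Jordan_Normal_Form.Matrix" "HOL-Library.Extended_Real"
begin

text \<open>Finite-dimensional Hilbert spaces are modelled as \<open>\<complex>^d\<close>, and
  \<open>\<B>(\<complex>^d)\<close> as the complex d x d matrices (carrier_mat d d).
  A linear map \<open>\<B>(\<complex>^k2) \<rightarrow> \<B>(\<complex>^k1)\<close> is a function on matrices; only its values
  on the carrier matter. Tensor products \<open>\<complex>^a \<otimes> \<complex>^b = \<complex>^(a*b)\<close> use the
  index convention (x,x') \<mapsto> x*b + x'.\<close>

definition mat_unit :: "nat \<Rightarrow> nat \<Rightarrow> nat \<Rightarrow> complex mat" where
  "mat_unit n x y = mat n n (\<lambda>(i,j). if i = x \<and> j = y then 1 else 0)"

definition lin_map :: "nat \<Rightarrow> nat \<Rightarrow> (complex mat \<Rightarrow> complex mat) \<Rightarrow> bool" where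
  "lin_map k2 k1 S \<longleftrightarrow>
     (\<forall>A \<in> carrier_mat k2 k2. S A \<in> carrier_mat k1 k1) \<and>
     (\<forall>A \<in> carrier_mat k2 k2. \<forall>B \<in> carrier_mat k2 k2. S (A + B) = S A + S B) \<and>
     (\<forall>c. \<forall>A \<in> carrier_mat k2 k2. S (smult_mat c A) = smult_mat c (S A))"

text \<open>Tensor product S1 \<otimes> S2 : \<B>(\<complex>^a \<otimes> \<complex>^b) \<rightarrow> \<B>(\<complex>^a' \<otimes> \<complex>^b') of linear maps
  S1 : \<B>(\<complex>^a) \<rightarrow> \<B>(\<complex>^a'), S2 : \<B>(\<complex>^b) \<rightarrow> \<B>(\<complex>^b'), defined by linear extension
  from the matrix units E_xy \<otimes> E_x'y'.\<close>
definition tensor_map ::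
  "nat \<Rightarrow> nat \<Rightarrow> nat \<Rightarrow> nat \<Rightarrow> (complex mat \<Rightarrow> complex mat) \<Rightarrow> (complex mat \<Rightarrow> complex mat)
     \<Rightarrow> complex mat \<Rightarrow> complex mat" where
  "tensor_map a b a' b' S1 S2 A = mat (a' * b') (a' * b') (\<lambda>(i,j).
      \<Sum>x<a. \<Sum>y<a. \<Sum>x'<b. \<Sum>y'<b.
        A $$ (x * b + x', y * b + y') * (S1 (mat_unit a x y)) $$ (i div b', j div b')
          * (S2 (mat_unit b x' y')) $$ (i mod b', j mod b'))"

definition ampl :: "nat \<Rightarrow> nat \<Rightarrow> nat \<Rightarrow> (complex mat \<Rightarrow> complex mat) \<Rightarrow> complex mat \<Rightarrow> complex mat" where
  "ampl k2 k1 j S = tensor_map k2 j k1 j S (\<lambda>A. A)"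

definition vnorm :: "complex vec \<Rightarrow> real" where
  "vnorm v = sqrt (\<Sum>i<dim_vec v. (cmod (v $ i))\<^sup>2)"

definition opnorm :: "complex mat \<Rightarrow> real" where
  "opnorm A = Sup {vnorm (A *\<^sub>v v) | v. v \<in> carrier_vec (dim_col A) \<and> vnorm v \<le> 1}"

definition cb_norm :: "nat \<Rightarrow> nat \<Rightarrow> (complex mat \<Rightarrow> complex mat) \<Rightarrow> real" where
  "cb_norm k2 k1 S = Sup {opnorm (ampl k2 k1 j S A) | j A.
       j \<ge> 1 \<and> A \<in> carrier_mat (k2 * j) (k2 * j) \<and> opnorm A \<le> 1}"

definition psd :: "complex mat \<Rightarrow> bool" where
  "psd A \<longleftrightarrow> dim_row A = dim_col A \<and>
     (\<forall>v \<in> carrier_vec (dim_row A).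
        let z = (\<Sum>i<dim_row A. \<Sum>k<dim_row A. cnj (v $ i) * A $$ (i,k) * v $ k)
        in Im z = 0 \<and> 0 \<le> Re z)"

definition completely_positive :: "nat \<Rightarrow> nat \<Rightarrow> (complex mat \<Rightarrow> complex mat) \<Rightarrow> bool" where
  "completely_positive k2 k1 S \<longleftrightarrow>
     (\<forall>j \<ge> 1. \<forall>A \<in> carrier_mat (k2 * j) (k2 * j). psd A \<longrightarrow> psd (ampl k2 k1 j S A))"

definition channel :: "nat \<Rightarrow> nat \<Rightarrow> (complex mat \<Rightarrow> complex mat) \<Rightarrow> bool" where
  "channel k2 k1 S \<longleftrightarrow> lin_map k2 k1 S \<and> completely_positive k2 k1 S \<and> S (1\<^sub>m k2) = 1\<^sub>m k1"

fun tpow :: "nat \<Rightarrow> nat \<Rightarrow> (complex mat \<Rightarrow> complex mat) \<Rightarrow> nat \<Rightarrow> complex mat \<Rightarrow> complex mat" where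
  "tpow d2 d1 T 0 = (\<lambda>A. A)"
| "tpow d2 d1 T (Suc n) = tensor_map d2 (d2 ^ n) d1 (d1 ^ n) T (tpow d2 d1 T n)"

definition Delta :: "nat \<Rightarrow> nat \<Rightarrow> (complex mat \<Rightarrow> complex mat) \<Rightarrow> nat \<Rightarrow> real" where
  "Delta k2 k1 T M = Inf {cb_norm M M (\<lambda>A. E (T (D A)) - A) | E D.
       channel M k2 D \<and> channel k1 M E}"

definition achievable :: "nat \<Rightarrow> nat \<Rightarrow> (complex mat \<Rightarrow> complex mat) \<Rightarrow> real \<Rightarrow> bool" where
  "achievable d2 d1 T c \<longleftrightarrow> c \<ge> 0 \<and>
     (\<lambda>n. Delta (d2 ^ n) (d1 ^ n) (tpow d2 d1 T n) (nat \<lfloor>2 powr (c * real n)\<rfloor>)) \<longlonglongrightarrow> 0"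

definition eps_achievable :: "nat \<Rightarrow> nat \<Rightarrow> (complex mat \<Rightarrow> complex mat) \<Rightarrow> real \<Rightarrow> real \<Rightarrow> bool" where
  "eps_achievable d2 d1 T \<epsilon> c \<longleftrightarrow> c \<ge> 0 \<and>
     (\<forall>\<^sub>F n in sequentially.
        Delta (d2 ^ n) (d1 ^ n) (tpow d2 d1 T n) (2 ^ nat \<lfloor>c * real n\<rfloor>) \<le> \<epsilon>)"

definition Qcap :: "nat \<Rightarrow> nat \<Rightarrow> (complex mat \<Rightarrow> complex mat) \<Rightarrow> ereal" where
  "Qcap d2 d1 T = Sup (ereal ` {c. achievable d2 d1 T c})"

definition Qeps :: "nat \<Rightarrow> nat \<Rightarrow> (complex mat \<Rightarrow> complex mat) \<Rightarrow> real \<Rightarrow> ereal" where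
  "Qeps d2 d1 T \<epsilon> = Sup (ereal ` {c. eps_achievable d2 d1 T \<epsilon> c})"

end

theory Submission
  imports Defs "HOL-Analysis.L2_Norm"
begin

lemma vnorm_L2: "vnorm v = L2_set (\<lambda>i. cmod (v $ i)) {..<dim_vec v}"
  unfolding vnorm_def L2_set_def by simp

lemma vnorm_nonneg: "0 \<le> vnorm v"
  unfolding vnorm_L2 by simp

lemma mv_entry:
  assumes "i < dim_row A" "dim_vec v = dim_col A"
  shows "(A *\<^sub>v v) $ i = (\<Sum>k<dim_col A. A $$ (i,k) * v $ k)"
  using assms by (auto simp: scalar_prod_def lessThan_atLeast0 intro!: sum.cong)

lemma vnorm_entry: "k < dim_vec v \<Longrightarrow> cmod (v $ k) \<le> vnorm v"
  unfolding vnorm_L2 by (rule member_le_L2_set) auto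

lemma vnorm_smult: "vnorm (c \<cdot>\<^sub>v v) = cmod c * vnorm v"
proof -
  have "vnorm (c \<cdot>\<^sub>v v) = L2_set (\<lambda>i. cmod c * cmod (v $ i)) {..<dim_vec v}"
    unfolding vnorm_L2 by (intro L2_set_cong) (auto simp: norm_mult)
  also have "\<dots> = cmod c * vnorm v"
    unfolding vnorm_L2 by (rule L2_set_right_distrib[symmetric]) simp
  finally show ?thesis .
qed

lemma vnorm_zero_iff: "vnorm v = 0 \<longleftrightarrow> (\<forall>i<dim_vec v. v $ i = 0)"
  unfolding vnorm_L2 by (subst L2_set_eq_0_iff) auto

lemma opnorm_set_bdd:
  "bdd_above {vnorm (A *\<^sub>v v) | v. v \<in> carrier_vec (dim_col A) \<and> vnorm v \<le> 1}"
proof (rule bdd_aboveI)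
  fix x assume "x \<in> {vnorm (A *\<^sub>v v) | v. v \<in> carrier_vec (dim_col A) \<and> vnorm v \<le> 1}"
  then obtain v where v: "v \<in> carrier_vec (dim_col A)" "vnorm v \<le> 1" and x: "x = vnorm (A *\<^sub>v v)" by auto
  have "x \<le> (\<Sum>i<dim_row A. cmod ((A *\<^sub>v v) $ i))"
    unfolding x vnorm_L2 dim_mult_mat_vec using L2_set_le_sum_abs[of "\<lambda>i. cmod ((A *\<^sub>v v) $ i)"] by (simp only: abs_norm_cancel)
  also have "\<dots> \<le> (\<Sum>i<dim_row A. \<Sum>k<dim_col A. cmod (A $$ (i,k)))"
  proof (rule sum_mono)
    fix i assume i: "i \<in> {..<dim_row A}"
    have "cmod ((A *\<^sub>v v) $ i) = cmod (\<Sum>k<dim_col A. A $$ (i,k) * v $ k)"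
      using i v by (subst mv_entry) auto
    also have "\<dots> \<le> (\<Sum>k<dim_col A. cmod (A $$ (i,k) * v $ k))" by (rule norm_sum)
    also have "\<dots> \<le> (\<Sum>k<dim_col A. cmod (A $$ (i,k)))"
    proof (rule sum_mono)
      fix k assume k: "k \<in> {..<dim_col A}"
      have "cmod (v $ k) \<le> 1" using vnorm_entry[of k v] v k by auto
      then show "cmod (A $$ (i,k) * v $ k) \<le> cmod (A $$ (i,k))"
        by (simp add: norm_mult mult_left_le)
    qed
    finally show "cmod ((A *\<^sub>v v) $ i) \<le> (\<Sum>k<dim_col A. cmod (A $$ (i,k)))" .
  qed
  finally show "x \<le> (\<Sum>i<dim_row A. \<Sum>k<dim_col A. cmod (A $$ (i,k)))" .
qed

lemma opnorm_set_ne: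
  "0\<^sub>v (dim_col A) \<in> carrier_vec (dim_col A) \<and> vnorm (0\<^sub>v (dim_col A)) \<le> 1"
  by (auto simp: vnorm_def)

lemma opnorm_ge: "v \<in> carrier_vec (dim_col A) \<Longrightarrow> vnorm v \<le> 1 \<Longrightarrow> vnorm (A *\<^sub>v v) \<le> opnorm A"
  unfolding opnorm_def by (rule cSup_upper[OF _ opnorm_set_bdd]) auto

lemma opnorm_nonneg: "0 \<le> opnorm A"
  using opnorm_ge[OF conjunct1[OF opnorm_set_ne] conjunct2[OF opnorm_set_ne]] vnorm_nonneg
  by (meson order_trans)

lemma opnorm_bound:
  assumes v: "v \<in> carrier_vec (dim_col A)"
  shows "vnorm (A *\<^sub>v v) \<le> opnorm A * vnorm v"
proof (cases "vnorm v = 0")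
  case True
  then have "\<forall>i<dim_vec v. v $ i = 0" by (simp add: vnorm_zero_iff)
  then have "\<forall>i<dim_row A. (A *\<^sub>v v) $ i = 0"
  proof (intro allI impI)
    fix i assume i: "i < dim_row A" and z: "\<forall>i<dim_vec v. v $ i = 0"
    have "(A *\<^sub>v v) $ i = (\<Sum>k<dim_col A. A $$ (i,k) * v $ k)"
      using i v by (intro mv_entry) auto
    also have "\<dots> = 0" using z v by (intro sum.neutral) auto
    finally show "(A *\<^sub>v v) $ i = 0" .
  qed
  then have "vnorm (A *\<^sub>v v) = 0" by (simp add: vnorm_zero_iff)
  then show ?thesis using True by simp
next
  case False
  then have pos: "vnorm v > 0" using vnorm_nonneg[of v] by simp
  define c where "c = 1 / vnorm v"
  have c: "c > 0" "c * vnorm v = 1" using pos by (auto simp: c_def)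
  define w where "w = complex_of_real c \<cdot>\<^sub>v v"
  have w: "w \<in> carrier_vec (dim_col A)" using v unfolding w_def by (intro carrier_vecI) simp
  have "vnorm w = c * vnorm v" unfolding w_def vnorm_smult using c by simp
  then have "vnorm w = 1" using c by simp
  then have 1: "vnorm (A *\<^sub>v w) \<le> opnorm A" using opnorm_ge[OF w] by simp
  have "A *\<^sub>v w = complex_of_real c \<cdot>\<^sub>v (A *\<^sub>v v)"
    unfolding w_def by (rule mult_mat_vec[OF _ v]) (rule carrier_matI; simp)
  then have "vnorm (A *\<^sub>v w) = c * vnorm (A *\<^sub>v v)" using c by (simp add: vnorm_smult)
  with 1 have "c * vnorm (A *\<^sub>v v) \<le> opnorm A" by simp
  then have "vnorm v * (c * vnorm (A *\<^sub>v v)) \<le> vnorm v * opnorm A"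
    using pos by (intro mult_left_mono) auto
  moreover have "vnorm v * (c * vnorm (A *\<^sub>v v)) = (c * vnorm v) * vnorm (A *\<^sub>v v)"
    by (simp only: mult_ac)
  ultimately show ?thesis using c(2) by (simp add: mult.commute)
qed
lemma opnorm_le:
  assumes "\<And>v. v \<in> carrier_vec (dim_col A) \<Longrightarrow> vnorm (A *\<^sub>v v) \<le> K * vnorm v" "0 \<le> K"
  shows "opnorm A \<le> K"
  unfolding opnorm_def
proof (rule cSup_least)
  show "{vnorm (A *\<^sub>v v) |v. v \<in> carrier_vec (dim_col A) \<and> vnorm v \<le> 1} \<noteq> {}"
    using opnorm_set_ne by blast
  fix x assume "x \<in> {vnorm (A *\<^sub>v v) |v. v \<in> carrier_vec (dim_col A) \<and> vnorm v \<le> 1}"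
  then obtain v where v: "v \<in> carrier_vec (dim_col A)" "vnorm v \<le> 1" and x: "x = vnorm (A *\<^sub>v v)" by auto
  have "x \<le> K * vnorm v" using assms(1)[OF v(1)] x by simp
  also have "\<dots> \<le> K" using v(2) assms(2) by (simp add: mult_left_le)
  finally show "x \<le> K" .
qed


lemma sum_blocks: fixes m j :: nat shows "(\<Sum>i<m*j. f i) = (\<Sum>a<m. \<Sum>s<j. f (a*j+s))"
proof (induction m)
  case 0 then show ?case by simp
next
  case (Suc m)
  have "{..<Suc m * j} = {..<m*j} \<union> {m*j..<m*j+j}" by auto
  then have "(\<Sum>i<Suc m*j. f i) = (\<Sum>i<m*j. f i) + (\<Sum>i\<in>{m*j..<m*j+j}. f i)"
    by (simp add: sum.union_disjoint ivl_disj_int)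
  also have "(\<Sum>i\<in>{m*j..<m*j+j}. f i) = (\<Sum>s<j. f (m*j+s))"
  proof -
    have "{m*j..<m*j+j} = {0+m*j..<j+m*j}" by (simp add: add.commute)
    then have "(\<Sum>i\<in>{m*j..<m*j+j}. f i) = (\<Sum>i\<in>{0..<j}. f (i+m*j))"
      by (simp only: sum.shift_bounds_nat_ivl)
    then show ?thesis by (simp add: lessThan_atLeast0 add.commute)
  qed
  finally show ?case using Suc by simp
qed

lemma dim_ampl[simp]: "dim_row (ampl k2 k1 j S A) = k1 * j" "dim_col (ampl k2 k1 j S A) = k1 * j"
  by (simp_all add: ampl_def tensor_map_def)

lemma ampl_carrier[simp]: "ampl k2 k1 j S A \<in> carrier_mat (k1*j) (k1*j)"
  by (simp add: carrier_matI)

lemma mat_unit_entry: "p < n \<Longrightarrow> q < n \<Longrightarrow> mat_unit n x y $$ (p,q) = (if p = x \<and> q = y then 1 else 0)"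
  by (simp add: mat_unit_def)

lemma sum2_delta:
  fixes f :: "nat \<Rightarrow> nat \<Rightarrow> complex"
  assumes "p < j" "q < j"
  shows "(\<Sum>x'<j. \<Sum>y'<j. f x' y' * (if p = x' \<and> q = y' then 1 else 0)) = f p q"
proof -
  have "(\<Sum>x'<j. \<Sum>y'<j. f x' y' * (if p = x' \<and> q = y' then 1 else 0))
      = (\<Sum>x'<j. if p = x' then (\<Sum>y'<j. f x' y' * (if q = y' then 1 else 0)) else 0)"
    by (intro sum.cong) auto
  also have "\<dots> = (\<Sum>y'<j. f p y' * (if q = y' then 1 else 0))"
    using assms by (simp add: sum.delta)
  also have "\<dots> = f p q" using assms by (simp add: sum.delta if_distrib[of "\<lambda>z. _ * z"] cong: if_cong)
  finally show ?thesis .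
qed

lemma ampl_entry:
  assumes "0 < j" "i < k1*j" "i' < k1*j"
  shows "ampl k2 k1 j S A $$ (i,i') =
    (\<Sum>x<k2. \<Sum>y<k2. A $$ (x*j + i mod j, y*j + i' mod j) * S (mat_unit k2 x y) $$ (i div j, i' div j))"
proof -
  have "ampl k2 k1 j S A $$ (i,i') = (\<Sum>x<k2. \<Sum>y<k2. \<Sum>x'<j. \<Sum>y'<j.
        A $$ (x * j + x', y * j + y') * S (mat_unit k2 x y) $$ (i div j, i' div j)
          * (mat_unit j x' y') $$ (i mod j, i' mod j))"
    using assms by (simp add: ampl_def tensor_map_def)
  also have "\<dots> = (\<Sum>x<k2. \<Sum>y<k2. A $$ (x*j + i mod j, y*j + i' mod j) * S (mat_unit k2 x y) $$ (i div j, i' div j))"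
  proof (intro sum.cong refl)
    fix x y
    show "(\<Sum>x'<j. \<Sum>y'<j. A $$ (x * j + x', y * j + y') * S (mat_unit k2 x y) $$ (i div j, i' div j)
          * (mat_unit j x' y') $$ (i mod j, i' mod j)) = A $$ (x*j + i mod j, y*j + i' mod j) * S (mat_unit k2 x y) $$ (i div j, i' div j)"
      using assms sum2_delta[of "i mod j" j "i' mod j" "\<lambda>x' y'. A $$ (x * j + x', y * j + y') * S (mat_unit k2 x y) $$ (i div j, i' div j)"]
      by (simp add: mat_unit_entry)
  qed
  finally show ?thesis .
qed


lemma L2_set_sum_le:
  assumes "finite K"
  shows "L2_set (\<lambda>i. \<Sum>k\<in>K. f k i) A \<le> (\<Sum>k\<in>K. L2_set (f k) A)"
  using assms
proof (induction K rule: finite_induct)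
  case empty then show ?case by (simp add: L2_set_def)
next
  case (insert k K)
  have "L2_set (\<lambda>i. \<Sum>k\<in>insert k K. f k i) A = L2_set (\<lambda>i. f k i + (\<Sum>k\<in>K. f k i)) A"
    using insert by simp
  also have "\<dots> \<le> L2_set (f k) A + L2_set (\<lambda>i. \<Sum>k\<in>K. f k i) A"
    by (rule L2_set_triangle_ineq)
  also have "\<dots> \<le> L2_set (f k) A + (\<Sum>k\<in>K. L2_set (f k) A)" using insert by simp
  finally show ?case using insert by simp
qed

lemma block_select:
  fixes h :: "nat \<Rightarrow> 'a::comm_monoid_add" and m j :: nat
  assumes "a < m"
  shows "(\<Sum>i<m*j. if i div j = a then h (i mod j) else 0) = (\<Sum>s<j. h s)"
proof -
  have "(\<Sum>i<m*j. if i div j = a then h (i mod j) else 0)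
      = (\<Sum>a'<m. \<Sum>s<j. if (a'*j+s) div j = a then h ((a'*j+s) mod j) else 0)"
    by (rule sum_blocks)
  also have "\<dots> = (\<Sum>a'<m. \<Sum>s<j. if a' = a then h s else 0)"
    by (intro sum.cong refl) auto
  also have "\<dots> = (\<Sum>a'<m. if a' = a then (\<Sum>s<j. h s) else 0)"
    by (intro sum.cong refl) auto
  also have "\<dots> = (\<Sum>s<j. h s)" using assms by (simp add: sum.delta')
  finally show ?thesis .
qed

lemma block_le:
  fixes h :: "nat \<Rightarrow> real" and m j :: nat
  assumes "x < m" "\<And>r. 0 \<le> h r"
  shows "(\<Sum>s<j. h (x*j+s)) \<le> (\<Sum>r<m*j. h r)"
proof -
  have "(\<Sum>s<j. h (x*j+s)) \<le> (\<Sum>a<m. \<Sum>s<j. h (a*j+s))"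
    using assms by (intro member_le_sum[of x "{..<m}" "\<lambda>a. \<Sum>s<j. h (a*j+s)"] sum_nonneg) auto
  also have "\<dots> = (\<Sum>r<m*j. h r)" by (rule sum_blocks[symmetric])
  finally show ?thesis .
qed

lemma vnorm_sq: "(vnorm v)\<^sup>2 = (\<Sum>i<dim_vec v. (cmod (v $ i))\<^sup>2)"
  unfolding vnorm_def by (simp add: sum_nonneg)

lemma vnorm_le_from_sq: "(\<Sum>i<dim_vec v. (cmod (v $ i))\<^sup>2) \<le> (\<Sum>i<dim_vec w. (cmod (w $ i))\<^sup>2) \<Longrightarrow> vnorm v \<le> vnorm w"
  unfolding vnorm_def by simp

lemma L2_set_sum4:
  assumes "finite X" "finite Y" "finite P" "finite Q"
  shows "L2_set (\<lambda>i. \<Sum>x\<in>X. \<Sum>y\<in>Y. \<Sum>a\<in>P. \<Sum>b\<in>Q. F x y a b i) I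
    \<le> (\<Sum>x\<in>X. \<Sum>y\<in>Y. \<Sum>a\<in>P. \<Sum>b\<in>Q. L2_set (F x y a b) I)"
proof -
  have "L2_set (\<lambda>i. \<Sum>x\<in>X. \<Sum>y\<in>Y. \<Sum>a\<in>P. \<Sum>b\<in>Q. F x y a b i) I
     \<le> (\<Sum>x\<in>X. L2_set (\<lambda>i. \<Sum>y\<in>Y. \<Sum>a\<in>P. \<Sum>b\<in>Q. F x y a b i) I)"
    using assms(1) by (rule L2_set_sum_le)
  also have "\<dots> \<le> (\<Sum>x\<in>X. \<Sum>y\<in>Y. L2_set (\<lambda>i. \<Sum>a\<in>P. \<Sum>b\<in>Q. F x y a b i) I)"
    using assms by (intro sum_mono L2_set_sum_le)
  also have "\<dots> \<le> (\<Sum>x\<in>X. \<Sum>y\<in>Y. \<Sum>a\<in>P. L2_set (\<lambda>i. \<Sum>b\<in>Q. F x y a b i) I)"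
    using assms by (intro sum_mono L2_set_sum_le)
  also have "\<dots> \<le> (\<Sum>x\<in>X. \<Sum>y\<in>Y. \<Sum>a\<in>P. \<Sum>b\<in>Q. L2_set (F x y a b) I)"
    using assms by (intro sum_mono L2_set_sum_le)
  finally show ?thesis .
qed

lemma norm_sum4:
  fixes F :: "_ \<Rightarrow> _ \<Rightarrow> _ \<Rightarrow> _ \<Rightarrow> complex"
  shows "cmod (\<Sum>x\<in>X. \<Sum>y\<in>Y. \<Sum>a\<in>P. \<Sum>b\<in>Q. F x y a b) \<le> (\<Sum>x\<in>X. \<Sum>y\<in>Y. \<Sum>a\<in>P. \<Sum>b\<in>Q. cmod (F x y a b))"
proof -
  have "cmod (\<Sum>x\<in>X. \<Sum>y\<in>Y. \<Sum>a\<in>P. \<Sum>b\<in>Q. F x y a b) \<le> (\<Sum>x\<in>X. cmod (\<Sum>y\<in>Y. \<Sum>a\<in>P. \<Sum>b\<in>Q. F x y a b))"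
    by (rule norm_sum)
  also have "\<dots> \<le> (\<Sum>x\<in>X. \<Sum>y\<in>Y. cmod (\<Sum>a\<in>P. \<Sum>b\<in>Q. F x y a b))"
    by (intro sum_mono norm_sum)
  also have "\<dots> \<le> (\<Sum>x\<in>X. \<Sum>y\<in>Y. \<Sum>a\<in>P. cmod (\<Sum>b\<in>Q. F x y a b))"
    by (intro sum_mono norm_sum)
  also have "\<dots> \<le> (\<Sum>x\<in>X. \<Sum>y\<in>Y. \<Sum>a\<in>P. \<Sum>b\<in>Q. cmod (F x y a b))"
    by (intro sum_mono norm_sum)
  finally show ?thesis .
qed

lemma ampl_bound:
  fixes S :: "complex mat \<Rightarrow> complex mat"
  assumes j: "0 < j" and A: "A \<in> carrier_mat (k2*j) (k2*j)" and v: "v \<in> carrier_vec (k1*j)"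
  shows "vnorm (ampl k2 k1 j S A *\<^sub>v v)
     \<le> (\<Sum>x<k2. \<Sum>y<k2. \<Sum>a<k1. \<Sum>b<k1. cmod (S (mat_unit k2 x y) $$ (a,b))) * opnorm A * vnorm v"
proof -
  define B where "B = ampl k2 k1 j S A"
  define c where "c x y a b = S (mat_unit k2 x y) $$ (a,b)" for x y a b
  define u where "u y b = vec (k2*j) (\<lambda>r. if r div j = y then v $ (b*j + r mod j) else 0)" for y b
  define g where "g x y a b = vec (k1*j) (\<lambda>i. if i div j = a then (A *\<^sub>v u y b) $ (x*j + i mod j) else 0)" for x y a b
  have dimv: "dim_vec v = k1*j" using v by simp
  have u_norm: "vnorm (u y b) \<le> vnorm v" if "y < k2" "b < k1" for y b
  proof (rule vnorm_le_from_sq)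
    have "(\<Sum>i<dim_vec (u y b). (cmod (u y b $ i))\<^sup>2)
        = (\<Sum>i<k2*j. if i div j = y then (cmod (v $ (b*j + i mod j)))\<^sup>2 else 0)"
      unfolding u_def by (intro sum.cong) auto
    also have "\<dots> = (\<Sum>s<j. (cmod (v $ (b*j + s)))\<^sup>2)"
      using block_select[where a=y and m=k2 and h="\<lambda>s. (cmod (v $ (b*j+s)))\<^sup>2" and j=j] that by simp
    also have "\<dots> \<le> (\<Sum>i<k1*j. (cmod (v $ i))\<^sup>2)"
      using that by (intro block_le) auto
    finally show "(\<Sum>i<dim_vec (u y b). (cmod (u y b $ i))\<^sup>2) \<le> (\<Sum>i<dim_vec v. (cmod (v $ i))\<^sup>2)"
      using dimv by simp
  qed
  have g_norm: "vnorm (g x y a b) \<le> opnorm A * vnorm v" if "x < k2" "y < k2" "a < k1" "b < k1" for x y a b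
  proof -
    have "vnorm (g x y a b) \<le> vnorm (A *\<^sub>v u y b)"
    proof (rule vnorm_le_from_sq)
      have "(\<Sum>i<dim_vec (g x y a b). (cmod (g x y a b $ i))\<^sup>2)
          = (\<Sum>i<k1*j. if i div j = a then (cmod ((A *\<^sub>v u y b) $ (x*j + i mod j)))\<^sup>2 else 0)"
        unfolding g_def by (intro sum.cong) auto
      also have "\<dots> = (\<Sum>s<j. (cmod ((A *\<^sub>v u y b) $ (x*j + s)))\<^sup>2)"
        using block_select[where a=a and m=k1 and h="\<lambda>s. (cmod ((A *\<^sub>v u y b) $ (x*j + s)))\<^sup>2" and j=j] that by simp
      also have "\<dots> \<le> (\<Sum>i<k2*j. (cmod ((A *\<^sub>v u y b) $ i))\<^sup>2)"
        using that by (intro block_le) auto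
      finally show "(\<Sum>i<dim_vec (g x y a b). (cmod (g x y a b $ i))\<^sup>2) \<le> (\<Sum>i<dim_vec (A *\<^sub>v u y b). (cmod ((A *\<^sub>v u y b) $ i))\<^sup>2)"
        using A by simp
    qed
    also have "\<dots> \<le> opnorm A * vnorm (u y b)"
      using A by (intro opnorm_bound) (simp add: u_def carrier_vecI)
    also have "\<dots> \<le> opnorm A * vnorm v"
      using u_norm[of y b] that by (intro mult_left_mono opnorm_nonneg) auto
    finally show ?thesis .
  qed
  have claim1: "(B *\<^sub>v v) $ i = (\<Sum>x<k2. \<Sum>y<k2. \<Sum>a<k1. \<Sum>b<k1. c x y a b * g x y a b $ i)"
    if i: "i < k1*j" for i
  proof -
    define a0 where "a0 = i div j"
    define s where "s = i mod j"
    have a0: "a0 < k1" using i j unfolding a0_def by (simp add: less_mult_imp_div_less)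
    have s: "s < j" using j unfolding s_def by simp
    have "(B *\<^sub>v v) $ i = (\<Sum>i'<k1*j. B $$ (i,i') * v $ i')"
      using i dimv unfolding B_def by (subst mv_entry) auto
    also have "\<dots> = (\<Sum>b<k1. \<Sum>t<j. B $$ (i, b*j+t) * v $ (b*j+t))"
      by (rule sum_blocks)
    also have "\<dots> = (\<Sum>b<k1. \<Sum>t<j. (\<Sum>x<k2. \<Sum>y<k2. A $$ (x*j + s, y*j + t) * c x y a0 b) * v $ (b*j+t))"
    proof (intro sum.cong refl)
      fix b t assume b: "b \<in> {..<k1}" and t: "t \<in> {..<j}"
      have bt: "b*j+t < k1*j" using b t
        by (metis lessThan_iff add.commute mult.commute less_imp_le_nat mult_Suc_right nat_add_left_cancel_less
            order_less_le_trans mult_le_mono2 Suc_leI)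
      show "B $$ (i, b*j+t) * v $ (b*j+t) = (\<Sum>x<k2. \<Sum>y<k2. A $$ (x*j + s, y*j + t) * c x y a0 b) * v $ (b*j+t)"
        unfolding B_def using ampl_entry[OF j i bt] t b unfolding c_def a0_def s_def by simp
    qed
    also have "\<dots> = (\<Sum>b<k1. \<Sum>t<j. \<Sum>x<k2. \<Sum>y<k2. c x y a0 b * (A $$ (x*j + s, y*j + t) * v $ (b*j+t)))"
      by (simp add: sum_distrib_right sum_distrib_left mult_ac)
    also have "\<dots> = (\<Sum>b<k1. \<Sum>x<k2. \<Sum>t<j. \<Sum>y<k2. c x y a0 b * (A $$ (x*j + s, y*j + t) * v $ (b*j+t)))"
      by (rule sum.cong[OF refl], rule sum.swap)
    also have "\<dots> = (\<Sum>b<k1. \<Sum>x<k2. \<Sum>y<k2. \<Sum>t<j. c x y a0 b * (A $$ (x*j + s, y*j + t) * v $ (b*j+t)))"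
      by (rule sum.cong[OF refl], rule sum.cong[OF refl], rule sum.swap)
    also have "\<dots> = (\<Sum>x<k2. \<Sum>b<k1. \<Sum>y<k2. \<Sum>t<j. c x y a0 b * (A $$ (x*j + s, y*j + t) * v $ (b*j+t)))"
      by (rule sum.swap)
    also have "\<dots> = (\<Sum>x<k2. \<Sum>y<k2. \<Sum>b<k1. \<Sum>t<j. c x y a0 b * (A $$ (x*j + s, y*j + t) * v $ (b*j+t)))"
      by (rule sum.cong[OF refl], rule sum.swap)
    also have "\<dots> = (\<Sum>x<k2. \<Sum>y<k2. \<Sum>a<k1. \<Sum>b<k1. c x y a b * g x y a b $ i)"
    proof (rule sum.cong[OF refl], rule sum.cong[OF refl])
      fix x y assume x: "x \<in> {..<k2}" and y: "y \<in> {..<k2}"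
      have xs: "x*j + s < k2*j" using x s
        by (metis lessThan_iff add.commute mult.commute less_imp_le_nat mult_Suc_right nat_add_left_cancel_less
            order_less_le_trans mult_le_mono2 Suc_leI)
      have Au: "(A *\<^sub>v u y b) $ (x*j+s) = (\<Sum>t<j. A $$ (x*j + s, y*j + t) * v $ (b*j+t))" if b: "b < k1" for b
      proof -
        have "(A *\<^sub>v u y b) $ (x*j+s) = (\<Sum>r<k2*j. A $$ (x*j+s, r) * u y b $ r)"
          using A xs by (subst mv_entry) (auto simp: u_def)
        also have "\<dots> = (\<Sum>y'<k2. \<Sum>t<j. A $$ (x*j+s, y'*j+t) * u y b $ (y'*j+t))"
          by (rule sum_blocks)
        also have "\<dots> = (\<Sum>y'<k2. if y' = y then (\<Sum>t<j. A $$ (x*j+s, y*j+t) * v $ (b*j+t)) else 0)"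
        proof (intro sum.cong refl)
          fix y' assume y': "y' \<in> {..<k2}"
          show "(\<Sum>t<j. A $$ (x*j+s, y'*j+t) * u y b $ (y'*j+t))
              = (if y' = y then (\<Sum>t<j. A $$ (x*j+s, y*j+t) * v $ (b*j+t)) else 0)"
          proof (cases "y' = y")
            case True
            show ?thesis unfolding True
            proof (simp, intro sum.cong refl)
              fix t assume t: "t \<in> {..<j}"
              have "y*j+t < k2*j" using y t
                by (metis lessThan_iff add.commute mult.commute less_imp_le_nat mult_Suc_right nat_add_left_cancel_less
                    order_less_le_trans mult_le_mono2 Suc_leI)
              then show "A $$ (x*j+s, y*j+t) * u y b $ (y*j+t) = A $$ (x*j+s, y*j+t) * v $ (b*j+t)"
                using t by (simp add: u_def)
            qed
          next
            case False
            have "y'*j+t < k2*j" if t: "t < j" for t using y' t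
              by (metis lessThan_iff add.commute mult.commute less_imp_le_nat mult_Suc_right nat_add_left_cancel_less
                  order_less_le_trans mult_le_mono2 Suc_leI)
            then show ?thesis using False by (simp add: u_def)
          qed
        qed
        also have "\<dots> = (\<Sum>t<j. A $$ (x*j + s, y*j + t) * v $ (b*j+t))"
          using y by (simp add: sum.delta')
        finally show ?thesis .
      qed
      have "(\<Sum>a<k1. \<Sum>b<k1. c x y a b * g x y a b $ i) = (\<Sum>a<k1. if a = a0 then (\<Sum>b<k1. c x y a0 b * (A *\<^sub>v u y b) $ (x*j+s)) else 0)"
        using i unfolding g_def a0_def s_def by (intro sum.cong refl) auto
      also have "\<dots> = (\<Sum>b<k1. c x y a0 b * (A *\<^sub>v u y b) $ (x*j+s))"
        using a0 by (simp add: sum.delta')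
      also have "\<dots> = (\<Sum>b<k1. \<Sum>t<j. c x y a0 b * (A $$ (x*j + s, y*j + t) * v $ (b*j+t)))"
        by (intro sum.cong refl) (simp add: Au sum_distrib_left)
      finally show "(\<Sum>b<k1. \<Sum>t<j. c x y a0 b * (A $$ (x*j + s, y*j + t) * v $ (b*j+t)))
          = (\<Sum>a<k1. \<Sum>b<k1. c x y a b * g x y a b $ i)" by simp
    qed
    finally show ?thesis .
  qed
  have dimB: "dim_vec (B *\<^sub>v v) = k1*j" unfolding B_def by simp
  have "vnorm (B *\<^sub>v v) = L2_set (\<lambda>i. cmod ((B *\<^sub>v v) $ i)) {..<k1*j}"
    unfolding vnorm_L2 dimB ..
  also have "\<dots> \<le> L2_set (\<lambda>i. \<Sum>x<k2. \<Sum>y<k2. \<Sum>a<k1. \<Sum>b<k1. cmod (c x y a b) * cmod (g x y a b $ i)) {..<k1*j}"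
  proof (rule L2_set_mono)
    fix i assume i: "i \<in> {..<k1*j}"
    show "cmod ((B *\<^sub>v v) $ i) \<le> (\<Sum>x<k2. \<Sum>y<k2. \<Sum>a<k1. \<Sum>b<k1. cmod (c x y a b) * cmod (g x y a b $ i))"
      unfolding claim1[of i, OF i[unfolded lessThan_iff]]
      using norm_sum4[of "\<lambda>x y a b. c x y a b * g x y a b $ i"] by (simp add: norm_mult)
  qed simp
  also have "\<dots> \<le> (\<Sum>x<k2. \<Sum>y<k2. \<Sum>a<k1. \<Sum>b<k1. L2_set (\<lambda>i. cmod (c x y a b) * cmod (g x y a b $ i)) {..<k1*j})"
    by (rule L2_set_sum4) auto
  also have "\<dots> = (\<Sum>x<k2. \<Sum>y<k2. \<Sum>a<k1. \<Sum>b<k1. cmod (c x y a b) * vnorm (g x y a b))"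
    unfolding vnorm_L2 by (simp add: g_def L2_set_right_distrib)
  also have "\<dots> \<le> (\<Sum>x<k2. \<Sum>y<k2. \<Sum>a<k1. \<Sum>b<k1. cmod (c x y a b) * (opnorm A * vnorm v))"
    by (intro sum_mono mult_left_mono g_norm) auto
  also have "\<dots> = (\<Sum>x<k2. \<Sum>y<k2. \<Sum>a<k1. \<Sum>b<k1. cmod (S (mat_unit k2 x y) $$ (a,b))) * opnorm A * vnorm v"
    by (simp add: c_def sum_distrib_right mult.assoc)
  finally show ?thesis unfolding B_def .
qed

definition cbC :: "nat \<Rightarrow> nat \<Rightarrow> (complex mat \<Rightarrow> complex mat) \<Rightarrow> real" where
  "cbC k2 k1 S = (\<Sum>x<k2. \<Sum>y<k2. \<Sum>a<k1. \<Sum>b<k1. cmod (S (mat_unit k2 x y) $$ (a,b)))"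

lemma cbC_nonneg: "0 \<le> cbC k2 k1 S"
  unfolding cbC_def by (intro sum_nonneg) auto

lemma ampl_opnorm:
  assumes "0 < j" "A \<in> carrier_mat (k2*j) (k2*j)"
  shows "opnorm (ampl k2 k1 j S A) \<le> cbC k2 k1 S * opnorm A"
proof (rule opnorm_le)
  fix v :: "complex vec" assume "v \<in> carrier_vec (dim_col (ampl k2 k1 j S A))"
  then have "v \<in> carrier_vec (k1*j)" by simp
  then show "vnorm (ampl k2 k1 j S A *\<^sub>v v) \<le> cbC k2 k1 S * opnorm A * vnorm v"
    unfolding cbC_def using assms by (intro ampl_bound) auto
qed (intro mult_nonneg_nonneg cbC_nonneg opnorm_nonneg)

lemma cb_set_bdd:
  "bdd_above {opnorm (ampl k2 k1 j S A) | j A. j \<ge> 1 \<and> A \<in> carrier_mat (k2 * j) (k2 * j) \<and> opnorm A \<le> 1}"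
proof (rule bdd_aboveI)
  fix x assume "x \<in> {opnorm (ampl k2 k1 j S A) | j A. j \<ge> 1 \<and> A \<in> carrier_mat (k2 * j) (k2 * j) \<and> opnorm A \<le> 1}"
  then obtain j A where jA: "j \<ge> 1" "A \<in> carrier_mat (k2 * j) (k2 * j)" "opnorm A \<le> 1" and x: "x = opnorm (ampl k2 k1 j S A)"
    by blast
  have "x \<le> cbC k2 k1 S * opnorm A" unfolding x using jA by (intro ampl_opnorm) auto
  also have "\<dots> \<le> cbC k2 k1 S" using jA cbC_nonneg[of k2 k1 S] by (simp add: mult_left_le)
  finally show "x \<le> cbC k2 k1 S" .
qed

lemma cb_mem:
  assumes "j \<ge> 1" "A \<in> carrier_mat (k2 * j) (k2 * j)" "opnorm A \<le> 1"
  shows "opnorm (ampl k2 k1 j S A) \<in> {opnorm (ampl k2 k1 j S A) | j A. j \<ge> 1 \<and> A \<in> carrier_mat (k2 * j) (k2 * j) \<and> opnorm A \<le> 1}"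
  unfolding mem_Collect_eq
  by (rule exI[of _ j], rule exI[of _ A]) (intro conjI refl assms)

lemma cb_norm_ge:
  assumes "j \<ge> 1" "A \<in> carrier_mat (k2 * j) (k2 * j)" "opnorm A \<le> 1"
  shows "opnorm (ampl k2 k1 j S A) \<le> cb_norm k2 k1 S"
  unfolding cb_norm_def by (rule cSup_upper[OF cb_mem[OF assms] cb_set_bdd])

lemma opnorm_zero: "opnorm (0\<^sub>m n m :: complex mat) \<le> 0"
proof (rule opnorm_le)
  fix v :: "complex vec" assume v: "v \<in> carrier_vec (dim_col (0\<^sub>m n m :: complex mat))"
  have "\<forall>i<n. (0\<^sub>m n m *\<^sub>v v) $ i = 0"
  proof (intro allI impI)
    fix i assume "i < n"
    then have "(0\<^sub>m n m *\<^sub>v v) $ i = (\<Sum>k<m. (0\<^sub>m n m :: complex mat) $$ (i,k) * v $ k)"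
      using v by (subst mv_entry) auto
    also have "\<dots> = 0" using \<open>i < n\<close> by (intro sum.neutral) auto
    finally show "(0\<^sub>m n m *\<^sub>v v) $ i = 0" .
  qed
  then have "vnorm (0\<^sub>m n m *\<^sub>v v) = 0" by (simp add: vnorm_zero_iff)
  then show "vnorm (0\<^sub>m n m *\<^sub>v v) \<le> 0 * vnorm v" by simp
qed simp

lemma cb_norm_nonneg: "0 \<le> cb_norm k2 k1 S"
proof -
  have z: "opnorm (0\<^sub>m (k2*1) (k2*1) :: complex mat) \<le> 1" using opnorm_zero[of "k2*1" "k2*1"] by simp
  have "opnorm (ampl k2 k1 1 S (0\<^sub>m (k2*1) (k2*1))) \<le> cb_norm k2 k1 S"
    by (rule cb_norm_ge[OF _ _ z]) auto
  then show ?thesis using opnorm_nonneg by (meson order_trans)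
qed

lemma cb_norm_le:
  assumes "\<And>j A. j \<ge> 1 \<Longrightarrow> A \<in> carrier_mat (k2 * j) (k2 * j) \<Longrightarrow> opnorm A \<le> 1 \<Longrightarrow> opnorm (ampl k2 k1 j S A) \<le> K"
  shows "cb_norm k2 k1 S \<le> K"
  unfolding cb_norm_def
proof (rule cSup_least)
  have z: "opnorm (0\<^sub>m (k2*1) (k2*1) :: complex mat) \<le> 1" using opnorm_zero[of "k2*1" "k2*1"] by simp
  have "opnorm (ampl k2 k1 1 S (0\<^sub>m (k2*1) (k2*1))) \<in> {opnorm (ampl k2 k1 j S A) | j A. j \<ge> 1 \<and> A \<in> carrier_mat (k2 * j) (k2 * j) \<and> opnorm A \<le> 1}"
    by (rule cb_mem[OF _ _ z]) auto
  then show "{opnorm (ampl k2 k1 j S A) | j A. j \<ge> 1 \<and> A \<in> carrier_mat (k2 * j) (k2 * j) \<and> opnorm A \<le> 1} \<noteq> {}"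
    by (metis empty_iff)
next
  fix x assume "x \<in> {opnorm (ampl k2 k1 j S A) | j A. j \<ge> 1 \<and> A \<in> carrier_mat (k2 * j) (k2 * j) \<and> opnorm A \<le> 1}"
  then obtain j A where jA: "j \<ge> 1" "A \<in> carrier_mat (k2 * j) (k2 * j)" "opnorm A \<le> 1" and x: "x = opnorm (ampl k2 k1 j S A)"
    unfolding mem_Collect_eq by blast
  show "x \<le> K" unfolding x by (rule assms[OF jA])
qed

lemma ampl_cong:
  assumes "\<And>x y. x < k2 \<Longrightarrow> y < k2 \<Longrightarrow> S (mat_unit k2 x y) = S' (mat_unit k2 x y)"
  shows "ampl k2 k1 j S A = ampl k2 k1 j S' A"
  unfolding ampl_def tensor_map_def using assms by (intro eq_matI) auto

lemma lin_expand:
  assumes S: "lin_map n m S" and X: "X \<in> carrier_mat n n" and ab: "a < m" "b < m"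
  shows "S X $$ (a,b) = (\<Sum>p<n. \<Sum>q<n. X $$ (p,q) * S (mat_unit n p q) $$ (a,b))"
proof -
  define XF where "XF F = mat n n (\<lambda>(p,q). if (p,q) \<in> F then X $$ (p,q) else 0)" for F
  have SC: "\<And>A. A \<in> carrier_mat n n \<Longrightarrow> S A \<in> carrier_mat m m"
   and SA: "\<And>A B. A \<in> carrier_mat n n \<Longrightarrow> B \<in> carrier_mat n n \<Longrightarrow> S (A + B) = S A + S B"
   and SS: "\<And>c A. A \<in> carrier_mat n n \<Longrightarrow> S (c \<cdot>\<^sub>m A) = c \<cdot>\<^sub>m S A"
    using S unfolding lin_map_def by auto
  have XFc: "XF F \<in> carrier_mat n n" for F unfolding XF_def by simp
  have Ec: "mat_unit n p q \<in> carrier_mat n n" for p q unfolding mat_unit_def by simp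
  have main: "S (XF F) $$ (a,b) = (\<Sum>(p,q)\<in>F. X $$ (p,q) * S (mat_unit n p q) $$ (a,b))"
    if "finite F" for F
    using that
  proof (induction F rule: finite_induct)
    case empty
    have "XF {} = 0 \<cdot>\<^sub>m XF {}" unfolding XF_def by (intro eq_matI) auto
    then have "S (XF {}) = 0 \<cdot>\<^sub>m S (XF {})" using SS[OF XFc] by metis
    then have "S (XF {}) $$ (a,b) = 0" using SC[OF XFc] ab
      by (metis carrier_matD index_smult_mat(1) mult_zero_left)
    then show ?case by simp
  next
    case (insert pq F)
    obtain p q where pq: "pq = (p,q)" by fastforce
    have "XF (insert pq F) = XF F + X $$ (p,q) \<cdot>\<^sub>m mat_unit n p q"
      unfolding XF_def mat_unit_def pq using insert(2) pq by (intro eq_matI) auto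
    then have "S (XF (insert pq F)) = S (XF F) + X $$ (p,q) \<cdot>\<^sub>m S (mat_unit n p q)"
      using SA[OF XFc, of "X $$ (p,q) \<cdot>\<^sub>m mat_unit n p q" F] SS[OF Ec] Ec by simp
    then have "S (XF (insert pq F)) $$ (a,b) = S (XF F) $$ (a,b) + X $$ (p,q) * S (mat_unit n p q) $$ (a,b)"
      using SC[OF XFc[of F]] SC[OF Ec[of p q]] ab by simp
    then show ?case using insert pq by simp
  qed
  have "X = XF ({..<n} \<times> {..<n})" unfolding XF_def using X by (intro eq_matI) auto
  then have "S X $$ (a,b) = (\<Sum>(p,q)\<in>{..<n} \<times> {..<n}. X $$ (p,q) * S (mat_unit n p q) $$ (a,b))"
    using main[of "{..<n} \<times> {..<n}"] by simp
  also have "\<dots> = (\<Sum>p<n. \<Sum>q<n. X $$ (p,q) * S (mat_unit n p q) $$ (a,b))"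
    by (simp add: sum.cartesian_product)
  finally show ?thesis .
qed

lemma blk_lt: fixes a s j M :: nat shows "a < M \<Longrightarrow> s < j \<Longrightarrow> a*j+s < M*j"
  by (metis add.commute mult.commute less_imp_le_nat mult_Suc_right nat_add_left_cancel_less
      order_less_le_trans mult_le_mono2 Suc_leI)

lemma sum_swap4:
  "(\<Sum>x\<in>X. \<Sum>y\<in>Y. \<Sum>p\<in>P. \<Sum>q\<in>Q. F x y p q) = (\<Sum>p\<in>P. \<Sum>q\<in>Q. \<Sum>x\<in>X. \<Sum>y\<in>Y. F x y p q)"
proof -
  have "(\<Sum>x\<in>X. \<Sum>y\<in>Y. \<Sum>p\<in>P. \<Sum>q\<in>Q. F x y p q) = (\<Sum>x\<in>X. \<Sum>p\<in>P. \<Sum>y\<in>Y. \<Sum>q\<in>Q. F x y p q)"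
    by (rule sum.cong[OF refl], rule sum.swap)
  also have "\<dots> = (\<Sum>p\<in>P. \<Sum>x\<in>X. \<Sum>y\<in>Y. \<Sum>q\<in>Q. F x y p q)"
    by (rule sum.swap)
  also have "\<dots> = (\<Sum>p\<in>P. \<Sum>x\<in>X. \<Sum>q\<in>Q. \<Sum>y\<in>Y. F x y p q)"
    by (rule sum.cong[OF refl], rule sum.cong[OF refl], rule sum.swap)
  also have "\<dots> = (\<Sum>p\<in>P. \<Sum>q\<in>Q. \<Sum>x\<in>X. \<Sum>y\<in>Y. F x y p q)"
    by (rule sum.cong[OF refl], rule sum.swap)
  finally show ?thesis .
qed

lemma ampl_comp:
  assumes S: "lin_map k3 k1 S" and R: "\<And>x y. x < k2 \<Longrightarrow> y < k2 \<Longrightarrow> R (mat_unit k2 x y) \<in> carrier_mat k3 k3"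
    and j: "0 < j"
  shows "ampl k2 k1 j (\<lambda>X. S (R X)) A = ampl k3 k1 j S (ampl k2 k3 j R A)"
proof (rule eq_matI)
  fix i i' assume "i < dim_row (ampl k3 k1 j S (ampl k2 k3 j R A))" "i' < dim_col (ampl k3 k1 j S (ampl k2 k3 j R A))"
  then have i: "i < k1*j" and i': "i' < k1*j" by auto
  define a where "a = i div j"
  define b where "b = i' div j"
  define s where "s = i mod j"
  define t where "t = i' mod j"
  have a: "a < k1" and b: "b < k1" using i i' j unfolding a_def b_def by (simp_all add: less_mult_imp_div_less)
  have s: "s < j" and t: "t < j" using j unfolding s_def t_def by simp_all
  have "ampl k2 k1 j (\<lambda>X. S (R X)) A $$ (i,i')
      = (\<Sum>x<k2. \<Sum>y<k2. A $$ (x*j + s, y*j + t) * S (R (mat_unit k2 x y)) $$ (a, b))"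
    unfolding a_def b_def s_def t_def by (rule ampl_entry[OF j i i'])
  also have "\<dots> = (\<Sum>x<k2. \<Sum>y<k2. A $$ (x*j + s, y*j + t) *
        (\<Sum>p<k3. \<Sum>q<k3. R (mat_unit k2 x y) $$ (p,q) * S (mat_unit k3 p q) $$ (a,b)))"
    using R a b by (intro sum.cong refl arg_cong2[where f="(*)"] lin_expand[OF S]) auto
  also have "\<dots> = (\<Sum>x<k2. \<Sum>y<k2. \<Sum>p<k3. \<Sum>q<k3.
        A $$ (x*j + s, y*j + t) * R (mat_unit k2 x y) $$ (p,q) * S (mat_unit k3 p q) $$ (a,b))"
    by (simp add: sum_distrib_left mult.assoc)
  also have "\<dots> = (\<Sum>p<k3. \<Sum>q<k3. \<Sum>x<k2. \<Sum>y<k2.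
        A $$ (x*j + s, y*j + t) * R (mat_unit k2 x y) $$ (p,q) * S (mat_unit k3 p q) $$ (a,b))"
    by (rule sum_swap4)
  also have "\<dots> = (\<Sum>p<k3. \<Sum>q<k3. (\<Sum>x<k2. \<Sum>y<k2. A $$ (x*j + s, y*j + t) * R (mat_unit k2 x y) $$ (p,q))
        * S (mat_unit k3 p q) $$ (a,b))"
    by (simp add: sum_distrib_right)
  also have "\<dots> = (\<Sum>p<k3. \<Sum>q<k3. ampl k2 k3 j R A $$ (p*j+s, q*j+t) * S (mat_unit k3 p q) $$ (a,b))"
  proof (rule sum.cong[OF refl], rule sum.cong[OF refl])
    fix p q assume p: "p \<in> {..<k3}" and q: "q \<in> {..<k3}"
    have "ampl k2 k3 j R A $$ (p*j+s, q*j+t) = (\<Sum>x<k2. \<Sum>y<k2. A $$ (x*j + s, y*j + t) * R (mat_unit k2 x y) $$ (p,q))"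
      using ampl_entry[OF j blk_lt[OF _ s, of p k3] blk_lt[OF _ t, of q k3], of k2 R A] p q s t by simp
    then show "(\<Sum>x<k2. \<Sum>y<k2. A $$ (x*j + s, y*j + t) * R (mat_unit k2 x y) $$ (p,q)) * S (mat_unit k3 p q) $$ (a,b)
      = ampl k2 k3 j R A $$ (p*j+s, q*j+t) * S (mat_unit k3 p q) $$ (a,b)" by simp
  qed
  also have "\<dots> = ampl k3 k1 j S (ampl k2 k3 j R A) $$ (i,i')"
    unfolding a_def b_def s_def t_def by (rule ampl_entry[OF j i i', symmetric])
  finally show "ampl k2 k1 j (\<lambda>X. S (R X)) A $$ (i,i') = ampl k3 k1 j S (ampl k2 k3 j R A) $$ (i,i')" .
qed simp_all

definition Phi :: "nat \<Rightarrow> nat \<Rightarrow> complex mat \<Rightarrow> complex mat" where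
  "Phi m M A = mat M M (\<lambda>(p,q). if p < m \<and> q < m then A $$ (p,q) else if p = q then A $$ (0,0) else 0)"

definition TL :: "nat \<Rightarrow> complex mat \<Rightarrow> complex mat" where
  "TL m X = mat m m (\<lambda>(p,q). X $$ (p,q))"

definition triv :: "nat \<Rightarrow> complex mat \<Rightarrow> complex mat" where
  "triv m A = (A $$ (0,0)) \<cdot>\<^sub>m 1\<^sub>m m"

lemma blk_div: fixes j :: nat shows "s < j \<Longrightarrow> (a*j+s) div j = a" by simp
lemma blk_mod: fixes j :: nat shows "s < j \<Longrightarrow> (a*j+s) mod j = s" by simp

lemma ampl_Phi:
  assumes j: "0 < j" and m: "0 < m" and i: "i < M*j" and i': "i' < M*j"
  shows "ampl m M j (Phi m M) A $$ (i,i') =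
    (if i < m*j \<and> i' < m*j then A $$ (i,i') else if i div j = i' div j then A $$ (i mod j, i' mod j) else 0)"
proof -
  define a where "a = i div j"
  define b where "b = i' div j"
  define s where "s = i mod j"
  define t where "t = i' mod j"
  have a: "a < M" and b: "b < M" using i i' j unfolding a_def b_def by (simp_all add: less_mult_imp_div_less)
  have s: "s < j" and t: "t < j" using j unfolding s_def t_def by simp_all
  have am: "a < m \<longleftrightarrow> i < m*j" and bm: "b < m \<longleftrightarrow> i' < m*j"
    unfolding a_def b_def using j by (simp_all add: div_less_iff_less_mult)
  have ii: "a*j+s = i" "b*j+t = i'" unfolding a_def b_def s_def t_def by simp_all
  have PE: "Phi m M (mat_unit m x y) $$ (a,b) = (if a < m \<and> b < m then (if a = x \<and> b = y then 1 else 0)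
      else if a = b then (if 0 = x \<and> 0 = y then 1 else 0) else 0)" for x y
    using a b m unfolding Phi_def by (simp add: mat_unit_entry)
  have "ampl m M j (Phi m M) A $$ (i,i') = (\<Sum>x<m. \<Sum>y<m. A $$ (x*j + s, y*j + t) * Phi m M (mat_unit m x y) $$ (a, b))"
    unfolding a_def b_def s_def t_def by (rule ampl_entry[OF j i i'])
  also have "\<dots> = (if a < m \<and> b < m then A $$ (a*j+s, b*j+t) else if a = b then A $$ (s,t) else 0)"
  proof (cases "a < m \<and> b < m")
    case True
    then show ?thesis unfolding PE using sum2_delta[of a m b "\<lambda>x y. A $$ (x*j + s, y*j + t)"] by simp
  next
    case False
    show ?thesis
    proof (cases "a = b")
      case True
      then show ?thesis unfolding PE using False m sum2_delta[of 0 m 0 "\<lambda>x y. A $$ (x*j + s, y*j + t)"] by simp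
    next
      case False2: False
      have c1: "(a < m \<and> b < m) = False" using False by simp
      have c2: "(a = b) = False" using False2 by simp
      show ?thesis unfolding PE c1 c2 by simp
    qed
  qed
  also have "\<dots> = (if i < m*j \<and> i' < m*j then A $$ (i,i') else if i div j = i' div j then A $$ (i mod j, i' mod j) else 0)"
    unfolding am bm ii unfolding a_def b_def s_def t_def ..
  finally show ?thesis .
qed

lemma ampl_triv:
  assumes j: "0 < j" and n: "0 < n" and i: "i < m*j" and i': "i' < m*j"
  shows "ampl n m j (triv m) A $$ (i,i') = (if i div j = i' div j then A $$ (i mod j, i' mod j) else 0)"
proof -
  have a: "i div j < m" and b: "i' div j < m" using i i' j by (simp_all add: less_mult_imp_div_less)
  have PE: "triv m (mat_unit n x y) $$ (i div j, i' div j) = (if i div j = i' div j then 1 else 0) * (if 0 = x \<and> 0 = y then 1 else 0)" for x y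
    using a b n unfolding triv_def by (simp add: mat_unit_entry)
  have "ampl n m j (triv m) A $$ (i,i') = (\<Sum>x<n. \<Sum>y<n. A $$ (x*j + i mod j, y*j + i' mod j) * triv m (mat_unit n x y) $$ (i div j, i' div j))"
    by (rule ampl_entry[OF j i i'])
  also have "\<dots> = (\<Sum>x<n. \<Sum>y<n. ((if i div j = i' div j then 1 else 0) * A $$ (x*j + i mod j, y*j + i' mod j)) * (if 0 = x \<and> 0 = y then 1 else 0))"
    unfolding PE by (simp add: mult_ac)
  also have "\<dots> = (if i div j = i' div j then 1 else 0) * A $$ (i mod j, i' mod j)"
    using sum2_delta[of 0 n 0 "\<lambda>x y. (if i div j = i' div j then 1 else 0) * A $$ (x*j + i mod j, y*j + i' mod j)"] n by simp
  finally show ?thesis by simp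
qed

lemma ampl_TL:
  assumes j: "0 < j" and mM: "m \<le> M" and i: "i < m*j" and i': "i' < m*j"
  shows "ampl k m j (\<lambda>X. TL m (E X)) A $$ (i,i') = ampl k M j E A $$ (i,i')"
proof -
  have a: "i div j < m" and b: "i' div j < m" using i i' j by (simp_all add: less_mult_imp_div_less)
  have i2: "i < M*j" "i' < M*j" using i i' mM
    by (meson less_le_trans mult_le_mono1)+
  show ?thesis using a b
    unfolding ampl_entry[OF j i i'] ampl_entry[OF j i2] by (simp add: TL_def)
qed

definition cnonneg :: "complex \<Rightarrow> bool" where
  "cnonneg z \<longleftrightarrow> Im z = 0 \<and> 0 \<le> Re z"

lemma cnonneg_add: "cnonneg a \<Longrightarrow> cnonneg b \<Longrightarrow> cnonneg (a + b)"
  unfolding cnonneg_def by simp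

lemma cnonneg_0: "cnonneg 0" unfolding cnonneg_def by simp

lemma cnonneg_sum: "(\<And>x. x \<in> X \<Longrightarrow> cnonneg (f x)) \<Longrightarrow> cnonneg (\<Sum>x\<in>X. f x)"
proof (induction X rule: infinite_finite_induct)
  case (infinite A) then show ?case by (simp add: cnonneg_0)
next
  case empty then show ?case by (simp add: cnonneg_0)
next
  case (insert x F) then show ?case by (simp add: cnonneg_add)
qed

definition qf :: "nat \<Rightarrow> complex mat \<Rightarrow> (nat \<Rightarrow> complex) \<Rightarrow> complex" where
  "qf N A w = (\<Sum>i<N. \<Sum>k<N. cnj (w i) * A $$ (i,k) * w k)"

lemma psdD:
  assumes "psd A" "A \<in> carrier_mat N N" "w \<in> carrier_vec N"
  shows "cnonneg (qf N A (\<lambda>i. w $ i))"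
  using assms unfolding psd_def cnonneg_def qf_def Let_def by auto

lemma psdI:
  assumes "B \<in> carrier_mat N N" "\<And>w. w \<in> carrier_vec N \<Longrightarrow> cnonneg (qf N B (\<lambda>i. w $ i))"
  shows "psd B"
  using assms unfolding psd_def cnonneg_def qf_def Let_def by auto

lemma sum_if_lt:
  fixes f :: "nat \<Rightarrow> 'a::comm_monoid_add"
  assumes "j \<le> N"
  shows "(\<Sum>i<N. if i < j then f i else 0) = (\<Sum>i<j. f i)"
proof -
  have "(\<Sum>i<N. if i < j then f i else 0) = (\<Sum>i\<in>{..<N} \<inter> {i. i < j}. f i)"
    by (simp add: sum.inter_restrict)
  also have "{..<N} \<inter> {i. i < j} = {..<j}" using assms by auto
  finally show ?thesis .
qed

lemma sum_if_lt2:
  fixes f :: "nat \<Rightarrow> nat \<Rightarrow> 'a::comm_monoid_add"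
  assumes "j \<le> N"
  shows "(\<Sum>i<N. \<Sum>k<N. if i < j \<and> k < j then f i k else 0) = (\<Sum>i<j. \<Sum>k<j. f i k)"
proof -
  have "(\<Sum>i<N. \<Sum>k<N. if i < j \<and> k < j then f i k else 0) = (\<Sum>i<N. if i < j then (\<Sum>k<N. if k < j then f i k else 0) else 0)"
    by (intro sum.cong refl) auto
  also have "\<dots> = (\<Sum>i<N. if i < j then (\<Sum>k<j. f i k) else 0)"
    using assms by (simp add: sum_if_lt)
  also have "\<dots> = (\<Sum>i<j. \<Sum>k<j. f i k)" using assms by (rule sum_if_lt)
  finally show ?thesis .
qed

lemma psd_pad:
  assumes "psd A" "A \<in> carrier_mat N N" "j \<le> N"
  shows "cnonneg (qf j A h)"
proof -
  define w where "w = vec N (\<lambda>i. if i < j then h i else 0)"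
  have "cnonneg (qf N A (\<lambda>i. w $ i))" using assms by (intro psdD) (auto simp: w_def)
  moreover have "qf N A (\<lambda>i. w $ i) = (\<Sum>i<N. \<Sum>k<N. if i < j \<and> k < j then cnj (h i) * A $$ (i,k) * h k else 0)"
    unfolding qf_def w_def by (intro sum.cong refl) auto
  moreover have "\<dots> = qf j A h" unfolding qf_def using assms(3) by (rule sum_if_lt2)
  ultimately show ?thesis by simp
qed

lemma psd_principal:
  assumes "psd C" "C \<in> carrier_mat N N" "n \<le> N" "B \<in> carrier_mat n n"
    and "\<And>i k. i < n \<Longrightarrow> k < n \<Longrightarrow> B $$ (i,k) = C $$ (i,k)"
  shows "psd B"
proof (rule psdI[OF assms(4)])
  fix w :: "complex vec" assume "w \<in> carrier_vec n"
  have "qf n B (\<lambda>i. w $ i) = qf n C (\<lambda>i. w $ i)" unfolding qf_def using assms(5) by simp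
  then show "cnonneg (qf n B (\<lambda>i. w $ i))" using psd_pad[OF assms(1-3)] by simp
qed

lemma qf_blocks:
  fixes X :: "nat \<Rightarrow> nat \<Rightarrow> nat \<Rightarrow> nat \<Rightarrow> complex"
  shows "(\<Sum>a<M. \<Sum>s<j. \<Sum>b<M. \<Sum>t<j. if P a \<and> a = b then X a s b t else 0) = (\<Sum>a<M. if P a then (\<Sum>s<j. \<Sum>t<j. X a s a t) else 0)"
proof (rule sum.cong[OF refl])
  fix a assume a: "a \<in> {..<M}"
  have "(\<Sum>s<j. \<Sum>b<M. \<Sum>t<j. if P a \<and> a = b then X a s b t else 0) = (\<Sum>s<j. if P a then (\<Sum>t<j. X a s a t) else 0)"
  proof (rule sum.cong[OF refl])
    fix s
    have "(\<Sum>b<M. \<Sum>t<j. if P a \<and> a = b then X a s b t else 0) = (\<Sum>b<M. if a = b then (if P a then (\<Sum>t<j. X a s b t) else 0) else 0)"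
      by (intro sum.cong refl) auto
    also have "\<dots> = (if P a then (\<Sum>t<j. X a s a t) else 0)" using a by (simp add: sum.delta)
    finally show "(\<Sum>b<M. \<Sum>t<j. if P a \<and> a = b then X a s b t else 0) = (if P a then (\<Sum>t<j. X a s a t) else 0)" .
  qed
  also have "\<dots> = (if P a then (\<Sum>s<j. \<Sum>t<j. X a s a t) else 0)" by simp
  finally show "(\<Sum>s<j. \<Sum>b<M. \<Sum>t<j. if P a \<and> a = b then X a s b t else 0) = (if P a then (\<Sum>s<j. \<Sum>t<j. X a s a t) else 0)" .
qed

lemma qf_as_blocks: "qf (M*j) B h = (\<Sum>a<M. \<Sum>s<j. \<Sum>b<M. \<Sum>t<j. cnj (h (a*j+s)) * B $$ (a*j+s, b*j+t) * h (b*j+t))"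
  unfolding qf_def sum_blocks by simp

lemma blk_lt_iff: fixes a s j m :: nat shows "s < j \<Longrightarrow> (a*j+s < m*j) = (a < m)"
proof -
  assume s: "s < j"
  then have "0 < j" by simp
  have d: "(a*j+s) div j = a" using s by simp
  have "(a*j+s) div j < m \<longleftrightarrow> a*j+s < m*j" using \<open>0 < j\<close> by (rule div_less_iff_less_mult)
  then show ?thesis using d by simp
qed

lemma psd_ampl_triv:
  assumes j: "0 < j" and n: "0 < n" and A: "psd A" "A \<in> carrier_mat (n*j) (n*j)"
  shows "psd (ampl n m j (triv m) A)"
proof (rule psdI[OF ampl_carrier])
  fix w :: "complex vec" assume "w \<in> carrier_vec (m*j)"
  define h where "h i = w $ i" for i
  have "qf (m*j) (ampl n m j (triv m) A) (\<lambda>i. w $ i) = (\<Sum>a<m. \<Sum>s<j. \<Sum>b<m. \<Sum>t<j.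
      cnj (h (a*j+s)) * ampl n m j (triv m) A $$ (a*j+s, b*j+t) * h (b*j+t))"
    unfolding h_def by (rule qf_as_blocks)
  also have "\<dots> = (\<Sum>a<m. \<Sum>s<j. \<Sum>b<m. \<Sum>t<j. if True \<and> a = b then cnj (h (a*j+s)) * A $$ (s,t) * h (b*j+t) else 0)"
    by (intro sum.cong refl) (simp add: ampl_triv[OF j n] blk_lt)
  also have "\<dots> = (\<Sum>a<m. if True then (\<Sum>s<j. \<Sum>t<j. cnj (h (a*j+s)) * A $$ (s,t) * h (a*j+t)) else 0)"
    by (rule qf_blocks)
  also have "\<dots> = (\<Sum>a<m. qf j A (\<lambda>s. h (a*j+s)))" unfolding qf_def by simp
  finally have eq: "qf (m*j) (ampl n m j (triv m) A) (\<lambda>i. w $ i) = (\<Sum>a<m. qf j A (\<lambda>s. h (a*j+s)))" .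
  have "j \<le> n*j" using n by simp
  then show "cnonneg (qf (m*j) (ampl n m j (triv m) A) (\<lambda>i. w $ i))"
    unfolding eq by (intro cnonneg_sum psd_pad[OF A])
qed

lemma psd_ampl_Phi:
  assumes j: "0 < j" and m: "0 < m" and A: "psd A" "A \<in> carrier_mat (m*j) (m*j)"
  shows "psd (ampl m M j (Phi m M) A)"
proof (rule psdI[OF ampl_carrier])
  fix w :: "complex vec" assume "w \<in> carrier_vec (M*j)"
  define h where "h i = w $ i" for i
  define B where "B = ampl m M j (Phi m M) A"
  have "qf (M*j) B h = (\<Sum>i<M*j. \<Sum>k<M*j.
     (if i < m*j \<and> k < m*j then cnj (h i) * A $$ (i,k) * h k else 0) +
     (if \<not> (i < m*j \<and> k < m*j) \<and> i div j = k div j then cnj (h i) * A $$ (i mod j, k mod j) * h k else 0))"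
    unfolding qf_def B_def by (intro sum.cong refl) (simp add: ampl_Phi[OF j m])
  also have "\<dots> = (\<Sum>i<M*j. \<Sum>k<M*j. if i < m*j \<and> k < m*j then cnj (h i) * A $$ (i,k) * h k else 0) +
     (\<Sum>i<M*j. \<Sum>k<M*j. if \<not> (i < m*j \<and> k < m*j) \<and> i div j = k div j then cnj (h i) * A $$ (i mod j, k mod j) * h k else 0)"
    by (simp add: sum.distrib)
  finally have eq: "qf (M*j) B h = \<dots>" .
  have T1: "cnonneg (\<Sum>i<M*j. \<Sum>k<M*j. if i < m*j \<and> k < m*j then cnj (h i) * A $$ (i,k) * h k else 0)"
  proof (cases "m \<le> M")
    case True
    then have "m*j \<le> M*j" by simp
    then have "(\<Sum>i<M*j. \<Sum>k<M*j. if i < m*j \<and> k < m*j then cnj (h i) * A $$ (i,k) * h k else 0) = qf (m*j) A h"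
      unfolding qf_def by (rule sum_if_lt2)
    then show ?thesis using psd_pad[OF A order_refl] by simp
  next
    case False
    have le: "M*j \<le> m*j" using False by simp
    have "(\<Sum>i<M*j. \<Sum>k<M*j. if i < m*j \<and> k < m*j then cnj (h i) * A $$ (i,k) * h k else 0) = qf (M*j) A h"
    proof -
      have lt: "\<And>i. i < M*j \<Longrightarrow> i < m*j" using le by (meson order_less_le_trans)
      show ?thesis unfolding qf_def
      proof (intro sum.cong refl)
        fix i k assume "i \<in> {..<M*j}" "k \<in> {..<M*j}"
        then have "i < m*j \<and> k < m*j" using lt by blast
        then show "(if i < m*j \<and> k < m*j then cnj (h i) * A $$ (i,k) * h k else 0) = cnj (h i) * A $$ (i,k) * h k"
          by (simp only: if_True simp_thms)
      qed
    qed
    then show ?thesis using psd_pad[OF A le] by simp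
  qed
  have "(\<Sum>i<M*j. \<Sum>k<M*j. if \<not> (i < m*j \<and> k < m*j) \<and> i div j = k div j then cnj (h i) * A $$ (i mod j, k mod j) * h k else 0)
      = (\<Sum>a<M. \<Sum>s<j. \<Sum>b<M. \<Sum>t<j. if \<not> a < m \<and> a = b then cnj (h (a*j+s)) * A $$ (s,t) * h (b*j+t) else 0)"
    unfolding sum_blocks by (intro sum.cong refl) (auto simp: blk_lt_iff)
  also have "\<dots> = (\<Sum>a<M. if \<not> a < m then qf j A (\<lambda>s. h (a*j+s)) else 0)"
    unfolding qf_blocks qf_def ..
  finally have eq2: "(\<Sum>i<M*j. \<Sum>k<M*j. if \<not> (i < m*j \<and> k < m*j) \<and> i div j = k div j then cnj (h i) * A $$ (i mod j, k mod j) * h k else 0)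
      = (\<Sum>a<M. if \<not> a < m then qf j A (\<lambda>s. h (a*j+s)) else 0)" .
  have jm: "j \<le> m*j" using m by simp
  have T2: "cnonneg (\<Sum>a<M. if \<not> a < m then qf j A (\<lambda>s. h (a*j+s)) else 0)"
    by (intro cnonneg_sum) (auto simp: cnonneg_0 psd_pad[OF A jm])
  show "cnonneg (qf (M*j) (ampl m M j (Phi m M) A) (\<lambda>i. w $ i))"
  proof -
    have "(\<lambda>i. w $ i) = h" unfolding h_def ..
    then have "qf (M*j) (ampl m M j (Phi m M) A) (\<lambda>i. w $ i) = qf (M*j) B h" unfolding B_def by simp
    then show ?thesis unfolding eq eq2 using cnonneg_add[OF T1 T2] by simp
  qed
qed

lemma vnorm_sq_le_imp:
  assumes "(vnorm x)\<^sup>2 \<le> (K * vnorm y)\<^sup>2" "0 \<le> K"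
  shows "vnorm x \<le> K * vnorm y"
proof (rule power2_le_imp_le[OF assms(1)])
  show "0 \<le> K * vnorm y" using assms(2) vnorm_nonneg[of y] by simp
qed

lemma opnorm_bound_sq:
  assumes "v \<in> carrier_vec (dim_col A)"
  shows "(vnorm (A *\<^sub>v v))\<^sup>2 \<le> (opnorm A)\<^sup>2 * (vnorm v)\<^sup>2"
proof -
  have "vnorm (A *\<^sub>v v) \<le> opnorm A * vnorm v" by (rule opnorm_bound[OF assms])
  then have "(vnorm (A *\<^sub>v v))\<^sup>2 \<le> (opnorm A * vnorm v)\<^sup>2"
    using vnorm_nonneg by (intro power_mono) auto
  then show ?thesis by (simp add: power_mult_distrib)
qed

lemma opnorm_principal:
  assumes C: "C \<in> carrier_mat N N" and nN: "n \<le> N" and B: "B \<in> carrier_mat n n"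
    and eq: "\<And>i k. i < n \<Longrightarrow> k < n \<Longrightarrow> B $$ (i,k) = C $$ (i,k)"
  shows "opnorm B \<le> opnorm C"
proof (rule opnorm_le[OF _ opnorm_nonneg])
  fix v :: "complex vec" assume v: "v \<in> carrier_vec (dim_col B)"
  then have dv: "dim_vec v = n" using B by simp
  define p where "p = vec N (\<lambda>k. if k < n then v $ k else 0)"
  have p: "p \<in> carrier_vec (dim_col C)" using C by (simp add: p_def carrier_vecI)
  have Bv: "(B *\<^sub>v v) $ i = (C *\<^sub>v p) $ i" if i: "i < n" for i
  proof -
    have "(B *\<^sub>v v) $ i = (\<Sum>k<n. B $$ (i,k) * v $ k)" using i B dv by (subst mv_entry) auto
    also have "\<dots> = (\<Sum>k<N. if k < n then C $$ (i,k) * v $ k else 0)"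
      using nN i eq by (simp add: sum_if_lt)
    also have "\<dots> = (\<Sum>k<N. C $$ (i,k) * p $ k)" unfolding p_def by (intro sum.cong refl) auto
    also have "\<dots> = (C *\<^sub>v p) $ i" using i nN C p by (subst mv_entry) auto
    finally show ?thesis .
  qed
  have "vnorm (B *\<^sub>v v) \<le> vnorm (C *\<^sub>v p)"
  proof (rule vnorm_le_from_sq)
    have "(\<Sum>i<dim_vec (B *\<^sub>v v). (cmod ((B *\<^sub>v v) $ i))\<^sup>2) = (\<Sum>i<n. (cmod ((C *\<^sub>v p) $ i))\<^sup>2)"
      using B Bv by simp
    also have "\<dots> \<le> (\<Sum>i<N. (cmod ((C *\<^sub>v p) $ i))\<^sup>2)"
      using nN by (intro sum_mono2) auto
    finally show "(\<Sum>i<dim_vec (B *\<^sub>v v). (cmod ((B *\<^sub>v v) $ i))\<^sup>2) \<le> (\<Sum>i<dim_vec (C *\<^sub>v p). (cmod ((C *\<^sub>v p) $ i))\<^sup>2)"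
      using C by simp
  qed
  also have "\<dots> \<le> opnorm C * vnorm p" by (rule opnorm_bound[OF p])
  also have "vnorm p = vnorm v"
  proof -
    have "(\<Sum>i<N. (cmod (p $ i))\<^sup>2) = (\<Sum>i<N. if i < n then (cmod (v $ i))\<^sup>2 else 0)"
      unfolding p_def by (intro sum.cong refl) auto
    also have "\<dots> = (\<Sum>i<n. (cmod (v $ i))\<^sup>2)" using nN by (rule sum_if_lt)
    finally show ?thesis unfolding vnorm_def p_def using dv by simp
  qed
  finally show "vnorm (B *\<^sub>v v) \<le> opnorm C * vnorm v" .
qed


lemma sum_split_lt: fixes f :: "nat \<Rightarrow> 'a::comm_monoid_add"
  assumes "m \<le> M" shows "(\<Sum>a<M. f a) = (\<Sum>a<m. f a) + (\<Sum>a\<in>{m..<M}. f a)"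
proof -
  have eq: "{..<M} = {..<m} \<union> {m..<M}" using assms by auto
  show ?thesis unfolding eq by (rule sum.union_disjoint) auto
qed

lemma div_ge_if: fixes k m j :: nat assumes "0 < j" "\<not> k < m*j" shows "m \<le> k div j"
  using assms div_less_iff_less_mult[of j k m] by simp

lemma opnorm_ampl_Phi:
  assumes j: "0 < j" and m: "0 < m" and mM: "m \<le> M" and A: "A \<in> carrier_mat (m*j) (m*j)"
  shows "opnorm (ampl m M j (Phi m M) A) \<le> opnorm A"
proof (rule opnorm_le[OF _ opnorm_nonneg])
  fix v :: "complex vec" assume v: "v \<in> carrier_vec (dim_col (ampl m M j (Phi m M) A))"
  then have dv: "dim_vec v = M*j" by simp
  define B where "B = ampl m M j (Phi m M) A"
  define w where "w = vec (m*j) (\<lambda>k. v $ k)"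
  define wa where "wa a = vec (m*j) (\<lambda>r. if r < j then v $ (a*j+r) else 0)" for a
  have mjMj: "m*j \<le> M*j" using mM by simp
  have jmj: "j \<le> m*j" using m by simp
  have w: "w \<in> carrier_vec (dim_col A)" using A by (simp add: w_def carrier_vecI)
  have wa: "wa a \<in> carrier_vec (dim_col A)" for a using A by (simp add: wa_def carrier_vecI)
  have Bv1: "(B *\<^sub>v v) $ i = (A *\<^sub>v w) $ i" if i: "i < m*j" for i
  proof -
    have iM: "i < M*j" using i mjMj by linarith
    have idiv: "i div j < m" using i j by (simp add: div_less_iff_less_mult)
    have "(B *\<^sub>v v) $ i = (\<Sum>k<M*j. B $$ (i,k) * v $ k)"
      unfolding B_def using iM dv by (subst mv_entry) auto
    also have "\<dots> = (\<Sum>k<M*j. if k < m*j then A $$ (i,k) * v $ k else 0)"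
    proof (rule sum.cong[OF refl])
      fix k assume k: "k \<in> {..<M*j}"
      show "B $$ (i,k) * v $ k = (if k < m*j then A $$ (i,k) * v $ k else 0)"
      proof (cases "k < m*j")
        case True
        then show ?thesis unfolding B_def using ampl_Phi[OF j m iM, of k A] k i by simp
      next
        case False
        then have "m \<le> k div j" using j by (intro div_ge_if)
        then have "i div j \<noteq> k div j" using idiv by linarith
        then show ?thesis unfolding B_def using ampl_Phi[OF j m iM, of k A] k False by simp
      qed
    qed
    also have "\<dots> = (\<Sum>k<m*j. A $$ (i,k) * v $ k)" using mjMj by (rule sum_if_lt)
    also have "\<dots> = (A *\<^sub>v w) $ i" using i A by (subst mv_entry) (auto simp: w_def)
    finally show ?thesis .
  qed
  have Bv2: "(B *\<^sub>v v) $ (a*j+s) = (A *\<^sub>v wa a) $ s" if a: "a < M" "\<not> a < m" and s: "s < j" for a s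
  proof -
    have iM: "a*j+s < M*j" using a s by (intro blk_lt)
    have nm: "\<not> a*j+s < m*j" using a s by (simp add: blk_lt_iff)
    have "(B *\<^sub>v v) $ (a*j+s) = (\<Sum>k<M*j. B $$ (a*j+s,k) * v $ k)"
      unfolding B_def using iM dv by (subst mv_entry) auto
    also have "\<dots> = (\<Sum>k<M*j. if k div j = a then A $$ (s, k mod j) * v $ (a*j + k mod j) else 0)"
    proof (rule sum.cong[OF refl])
      fix k assume k: "k \<in> {..<M*j}"
      have kk: "k = (k div j)*j + k mod j" by simp
      show "B $$ (a*j+s,k) * v $ k = (if k div j = a then A $$ (s, k mod j) * v $ (a*j + k mod j) else 0)"
      proof (cases "k div j = a")
        case True
        then have "v $ k = v $ (a*j + k mod j)" using kk by metis
        then show ?thesis unfolding B_def using ampl_Phi[OF j m iM, of k A] k nm s True by simp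
      next
        case False
        then show ?thesis unfolding B_def using ampl_Phi[OF j m iM, of k A] k nm s by simp
      qed
    qed
    also have "\<dots> = (\<Sum>t<j. A $$ (s, t) * v $ (a*j + t))"
      using block_select[where a=a and m=M and j=j and h="\<lambda>t. A $$ (s, t) * v $ (a*j + t)"] a by simp
    also have "\<dots> = (\<Sum>r<m*j. if r < j then A $$ (s, r) * v $ (a*j + r) else 0)"
      using jmj by (rule sum_if_lt[symmetric])
    also have "\<dots> = (A *\<^sub>v wa a) $ s"
    proof -
      have sm: "s < m*j" using s jmj by linarith
      have "(A *\<^sub>v wa a) $ s = (\<Sum>r<m*j. A $$ (s, r) * wa a $ r)" using sm A by (subst mv_entry) (auto simp: wa_def)
      also have "\<dots> = (\<Sum>r<m*j. if r < j then A $$ (s, r) * v $ (a*j + r) else 0)"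
        unfolding wa_def by (intro sum.cong refl) auto
      finally show ?thesis by simp
    qed
    finally show ?thesis .
  qed
  define F where "F a = (\<Sum>s<j. (cmod ((B *\<^sub>v v) $ (a*j+s)))\<^sup>2)" for a
  define G where "G a = (opnorm A)\<^sup>2 * (\<Sum>s<j. (cmod (v $ (a*j+s)))\<^sup>2)" for a
  have part1: "(\<Sum>a<m. F a) \<le> (\<Sum>a<m. G a)"
  proof -
    have "(\<Sum>a<m. F a) = (\<Sum>i<m*j. (cmod ((A *\<^sub>v w) $ i))\<^sup>2)"
      unfolding F_def sum_blocks by (intro sum.cong refl) (simp add: Bv1 blk_lt)
    also have "\<dots> = (vnorm (A *\<^sub>v w))\<^sup>2" unfolding vnorm_sq using A by simp
    also have "\<dots> \<le> (opnorm A)\<^sup>2 * (vnorm w)\<^sup>2" by (rule opnorm_bound_sq[OF w])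
    also have "(vnorm w)\<^sup>2 = (\<Sum>a<m. \<Sum>s<j. (cmod (v $ (a*j+s)))\<^sup>2)"
    proof -
      have "(vnorm w)\<^sup>2 = (\<Sum>i<m*j. (cmod (v $ i))\<^sup>2)" unfolding vnorm_sq w_def by (intro sum.cong) auto
      also have "\<dots> = (\<Sum>a<m. \<Sum>s<j. (cmod (v $ (a*j+s)))\<^sup>2)" by (rule sum_blocks)
      finally show ?thesis .
    qed
    finally show ?thesis unfolding G_def by (simp add: sum_distrib_left)
  qed
  have part2: "F a \<le> G a" if a: "a \<in> {m..<M}" for a
  proof -
    have "F a = (\<Sum>s<j. (cmod ((A *\<^sub>v wa a) $ s))\<^sup>2)"
      unfolding F_def using a by (intro sum.cong refl) (simp add: Bv2)
    also have "\<dots> \<le> (\<Sum>s<m*j. (cmod ((A *\<^sub>v wa a) $ s))\<^sup>2)"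
      using jmj by (intro sum_mono2) auto
    also have "\<dots> = (vnorm (A *\<^sub>v wa a))\<^sup>2" unfolding vnorm_sq using A by simp
    also have "\<dots> \<le> (opnorm A)\<^sup>2 * (vnorm (wa a))\<^sup>2" by (rule opnorm_bound_sq[OF wa])
    also have "(vnorm (wa a))\<^sup>2 = (\<Sum>s<j. (cmod (v $ (a*j+s)))\<^sup>2)"
    proof -
      have "(vnorm (wa a))\<^sup>2 = (\<Sum>r<m*j. if r < j then (cmod (v $ (a*j+r)))\<^sup>2 else 0)"
        unfolding vnorm_sq wa_def by (intro sum.cong) auto
      also have "\<dots> = (\<Sum>s<j. (cmod (v $ (a*j+s)))\<^sup>2)" using jmj by (rule sum_if_lt)
      finally show ?thesis .
    qed
    finally show ?thesis unfolding G_def .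
  qed
  have "(vnorm (B *\<^sub>v v))\<^sup>2 = (\<Sum>i<M*j. (cmod ((B *\<^sub>v v) $ i))\<^sup>2)"
    unfolding vnorm_sq B_def by (simp del: index_mult_mat_vec)
  also have "\<dots> = (\<Sum>a<M. F a)" unfolding F_def by (rule sum_blocks)
  also have "\<dots> = (\<Sum>a<m. F a) + (\<Sum>a\<in>{m..<M}. F a)" using mM by (rule sum_split_lt)
  also have "\<dots> \<le> (\<Sum>a<m. G a) + (\<Sum>a\<in>{m..<M}. G a)"
    using part1 part2 by (intro add_mono[OF part1] sum_mono) auto
  also have "\<dots> = (\<Sum>a<M. G a)" using mM by (rule sum_split_lt[symmetric])
  also have "\<dots> = (opnorm A)\<^sup>2 * (\<Sum>i<M*j. (cmod (v $ i))\<^sup>2)"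
    unfolding G_def by (simp add: sum_blocks sum_distrib_left)
  also have "\<dots> = (opnorm A * vnorm v)\<^sup>2" by (simp add: power_mult_distrib vnorm_sq dv)
  finally show "vnorm (ampl m M j (Phi m M) A *\<^sub>v v) \<le> opnorm A * vnorm v"
    unfolding B_def by (rule vnorm_sq_le_imp[OF _ opnorm_nonneg])
qed

lemma lin_mapD:
  assumes "lin_map n m S"
  shows "\<And>A. A \<in> carrier_mat n n \<Longrightarrow> S A \<in> carrier_mat m m"
    and "\<And>A B. A \<in> carrier_mat n n \<Longrightarrow> B \<in> carrier_mat n n \<Longrightarrow> S (A + B) = S A + S B"
    and "\<And>c A. A \<in> carrier_mat n n \<Longrightarrow> S (c \<cdot>\<^sub>m A) = c \<cdot>\<^sub>m S A"
  using assms unfolding lin_map_def by auto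

lemma lin_comp:
  assumes S: "lin_map a b S" and R: "lin_map b c R"
  shows "lin_map a c (\<lambda>X. R (S X))"
  unfolding lin_map_def
proof (intro conjI ballI allI)
  fix A :: "complex mat" assume A: "A \<in> carrier_mat a a"
  show "R (S A) \<in> carrier_mat c c" by (rule lin_mapD(1)[OF R lin_mapD(1)[OF S A]])
  fix c' show "R (S (c' \<cdot>\<^sub>m A)) = c' \<cdot>\<^sub>m R (S A)"
    using lin_mapD(3)[OF S A] lin_mapD(3)[OF R lin_mapD(1)[OF S A]] by simp
next
  fix A B :: "complex mat" assume A: "A \<in> carrier_mat a a" and B: "B \<in> carrier_mat a a"
  show "R (S (A + B)) = R (S A) + R (S B)"
    using lin_mapD(2)[OF S A B] lin_mapD(2)[OF R lin_mapD(1)[OF S A] lin_mapD(1)[OF S B]] by simp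
qed

lemma lin_minus_id:
  assumes S: "lin_map n n S"
  shows "lin_map n n (\<lambda>X. S X - X)"
  unfolding lin_map_def
proof (intro conjI ballI allI)
  fix A :: "complex mat" assume A: "A \<in> carrier_mat n n"
  have SA: "S A \<in> carrier_mat n n" by (rule lin_mapD(1)[OF S A])
  show "S A - A \<in> carrier_mat n n" using A by (rule minus_carrier_mat)
  fix c show "S (c \<cdot>\<^sub>m A) - c \<cdot>\<^sub>m A = c \<cdot>\<^sub>m (S A - A)"
    using lin_mapD(3)[OF S A] SA A by (intro eq_matI) (auto simp: algebra_simps)
next
  fix A B :: "complex mat" assume A: "A \<in> carrier_mat n n" and B: "B \<in> carrier_mat n n"
  have SA: "S A \<in> carrier_mat n n" by (rule lin_mapD(1)[OF S A])
  have SB: "S B \<in> carrier_mat n n" by (rule lin_mapD(1)[OF S B])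
  show "S (A + B) - (A + B) = S A - A + (S B - B)"
    using lin_mapD(2)[OF S A B] SA SB A B by (intro eq_matI) auto
qed

lemma lin_Phi:
  assumes m: "0 < m"
  shows "lin_map m M (Phi m M)"
  unfolding lin_map_def
proof (intro conjI ballI allI)
  fix A :: "complex mat" assume A: "A \<in> carrier_mat m m"
  show "Phi m M A \<in> carrier_mat M M" by (simp add: Phi_def carrier_matI)
  fix c show "Phi m M (c \<cdot>\<^sub>m A) = c \<cdot>\<^sub>m Phi m M A"
    using A m by (intro eq_matI) (auto simp: Phi_def)
next
  fix A B :: "complex mat" assume A: "A \<in> carrier_mat m m" and B: "B \<in> carrier_mat m m"
  show "Phi m M (A + B) = Phi m M A + Phi m M B"
    using A B m by (intro eq_matI) (auto simp: Phi_def)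
qed

lemma lin_TL:
  assumes E: "lin_map k M E" and mM: "m \<le> M"
  shows "lin_map k m (\<lambda>B. TL m (E B))"
  unfolding lin_map_def
proof (intro conjI ballI allI)
  fix A :: "complex mat" assume A: "A \<in> carrier_mat k k"
  have EA: "E A \<in> carrier_mat M M" by (rule lin_mapD(1)[OF E A])
  show "TL m (E A) \<in> carrier_mat m m" by (simp add: TL_def carrier_matI)
  fix c show "TL m (E (c \<cdot>\<^sub>m A)) = c \<cdot>\<^sub>m TL m (E A)"
    using lin_mapD(3)[OF E A] EA mM by (intro eq_matI) (auto simp: TL_def)
next
  fix A B :: "complex mat" assume A: "A \<in> carrier_mat k k" and B: "B \<in> carrier_mat k k"
  have EA: "E A \<in> carrier_mat M M" by (rule lin_mapD(1)[OF E A])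
  have EB: "E B \<in> carrier_mat M M" by (rule lin_mapD(1)[OF E B])
  show "TL m (E (A + B)) = TL m (E A) + TL m (E B)"
    using lin_mapD(2)[OF E A B] EA EB mM by (intro eq_matI) (auto simp: TL_def)
qed

lemma Phi_one: "0 < m \<Longrightarrow> Phi m M (1\<^sub>m m) = 1\<^sub>m M"
  by (intro eq_matI) (auto simp: Phi_def)

lemma TL_one: "m \<le> M \<Longrightarrow> TL m (1\<^sub>m M) = 1\<^sub>m m"
  by (intro eq_matI) (auto simp: TL_def)

lemma channelD:
  assumes "channel n m S"
  shows "lin_map n m S" "S (1\<^sub>m n) = 1\<^sub>m m"
    "\<And>j A. j \<ge> 1 \<Longrightarrow> A \<in> carrier_mat (n*j) (n*j) \<Longrightarrow> psd A \<Longrightarrow> psd (ampl n m j S A)"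
  using assms unfolding channel_def completely_positive_def by auto

lemma Phi_unit_carrier: "Phi m M (mat_unit m x y) \<in> carrier_mat M M"
  by (simp add: Phi_def carrier_matI)

lemma channel_D':
  assumes D: "channel M k2 D" and m: "0 < m" and mM: "m \<le> M"
  shows "channel m k2 (\<lambda>A. D (Phi m M A))"
  unfolding channel_def completely_positive_def
proof (intro conjI allI impI ballI)
  show "lin_map m k2 (\<lambda>A. D (Phi m M A))" by (rule lin_comp[OF lin_Phi[OF m] channelD(1)[OF D]])
  show "D (Phi m M (1\<^sub>m m)) = 1\<^sub>m k2" using Phi_one[OF m] channelD(2)[OF D] by simp
  fix j :: nat and A assume j: "1 \<le> j" and A: "A \<in> carrier_mat (m*j) (m*j)" and pA: "psd A"
  have eq: "ampl m k2 j (\<lambda>A. D (Phi m M A)) A = ampl M k2 j D (ampl m M j (Phi m M) A)"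
    using j by (intro ampl_comp[where R="Phi m M", OF channelD(1)[OF D]]) (auto simp: Phi_unit_carrier)
  have "psd (ampl m M j (Phi m M) A)" using j m pA A by (intro psd_ampl_Phi) auto
  then show "psd (ampl m k2 j (\<lambda>A. D (Phi m M A)) A)" unfolding eq
    using j by (intro channelD(3)[OF D]) auto
qed

lemma channel_E':
  assumes E: "channel k1 M E" and mM: "m \<le> M"
  shows "channel k1 m (\<lambda>B. TL m (E B))"
  unfolding channel_def completely_positive_def
proof (intro conjI allI impI ballI)
  show "lin_map k1 m (\<lambda>B. TL m (E B))" by (rule lin_TL[OF channelD(1)[OF E] mM])
  show "TL m (E (1\<^sub>m k1)) = 1\<^sub>m m" using TL_one[OF mM] channelD(2)[OF E] by simp
  fix j :: nat and A assume j: "1 \<le> j" and A: "A \<in> carrier_mat (k1*j) (k1*j)" and pA: "psd A"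
  have "psd (ampl k1 M j E A)" using j A pA by (rule channelD(3)[OF E])
  moreover have "m*j \<le> M*j" using mM by simp
  ultimately show "psd (ampl k1 m j (\<lambda>B. TL m (E B)) A)"
  proof (rule psd_principal[OF _ ampl_carrier _ ampl_carrier])
    fix i k assume "i < m*j" "k < m*j"
    moreover have "0 < j" using j by simp
    ultimately show "ampl k1 m j (\<lambda>B. TL m (E B)) A $$ (i,k) = ampl k1 M j E A $$ (i,k)"
      using mM by (intro ampl_TL)
  qed
qed

lemma channel_triv:
  assumes n: "0 < n"
  shows "channel n m (triv m)"
  unfolding channel_def completely_positive_def
proof (intro conjI allI impI ballI)
  show "lin_map n m (triv m)"
    unfolding lin_map_def
  proof (intro conjI ballI allI)
    fix A :: "complex mat" assume A: "A \<in> carrier_mat n n"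
    show "triv m A \<in> carrier_mat m m" by (simp add: triv_def)
    fix c show "triv m (c \<cdot>\<^sub>m A) = c \<cdot>\<^sub>m triv m A"
      using A n by (intro eq_matI) (auto simp: triv_def)
  next
    fix A B :: "complex mat" assume A: "A \<in> carrier_mat n n" and B: "B \<in> carrier_mat n n"
    show "triv m (A + B) = triv m A + triv m B"
      using A B n by (intro eq_matI) (auto simp: triv_def algebra_simps)
  qed
  show "triv m (1\<^sub>m n) = 1\<^sub>m m" using n by (intro eq_matI) (auto simp: triv_def)
  fix j :: nat and A assume j: "1 \<le> j" and A: "A \<in> carrier_mat (n*j) (n*j)" and pA: "psd A"
  show "psd (ampl n m j (triv m) A)" using j n pA A by (intro psd_ampl_triv) auto
qed

lemma cb_compare:
  assumes T: "lin_map k2 k1 T" and D: "channel M k2 D" and E: "channel k1 M E"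
    and m: "0 < m" and mM: "m \<le> M"
  shows "cb_norm m m (\<lambda>A. TL m (E (T (D (Phi m M A)))) - A) \<le> cb_norm M M (\<lambda>A. E (T (D A)) - A)"
proof (rule cb_norm_le)
  fix j :: nat and A :: "complex mat"
  assume j1: "j \<ge> 1" and A: "A \<in> carrier_mat (m * j) (m * j)" and nA: "opnorm A \<le> 1"
  have j: "0 < j" using j1 by simp
  define S where "S = (\<lambda>X. E (T (D X)) - X)"
  have linETD: "lin_map M M (\<lambda>X. E (T (D X)))"
    by (rule lin_comp[OF lin_comp[OF channelD(1)[OF D] T] channelD(1)[OF E]])
  have linS: "lin_map M M S" unfolding S_def by (rule lin_minus_id[OF linETD])
  define Y where "Y = ampl m M j (Phi m M) A"
  have Yc: "Y \<in> carrier_mat (M * j) (M * j)" unfolding Y_def by simp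
  have nY: "opnorm Y \<le> 1" unfolding Y_def using opnorm_ampl_Phi[OF j m mM A] nA by simp
  have eq1: "ampl m m j (\<lambda>A. TL m (E (T (D (Phi m M A)))) - A) A = ampl m m j (\<lambda>X. TL m (S (Phi m M X))) A"
  proof (rule ampl_cong)
    fix x y assume "x < m" "y < m"
    define X where "X = mat_unit m x y"
    have Xc: "X \<in> carrier_mat m m" unfolding X_def mat_unit_def by simp
    have Zc: "E (T (D (Phi m M X))) \<in> carrier_mat M M"
      by (rule lin_mapD(1)[OF linETD lin_mapD(1)[OF lin_Phi[OF m] Xc]])
    have "TL m (E (T (D (Phi m M X)))) - X = TL m (S (Phi m M X))"
    proof (rule eq_matI)
      fix i k assume "i < dim_row (TL m (S (Phi m M X)))" "k < dim_col (TL m (S (Phi m M X)))"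
      then have ik: "i < m" "k < m" by (simp_all add: TL_def)
      then have ik2: "i < M" "k < M" using mM by linarith+
      show "(TL m (E (T (D (Phi m M X)))) - X) $$ (i,k) = TL m (S (Phi m M X)) $$ (i,k)"
        using ik ik2 Xc Zc unfolding S_def by (simp add: TL_def Phi_def)
    qed (use Xc in \<open>simp_all add: TL_def\<close>)
    then show "TL m (E (T (D (Phi m M (mat_unit m x y))))) - mat_unit m x y = TL m (S (Phi m M (mat_unit m x y)))"
      unfolding X_def .
  qed
  have eq2: "ampl m m j (\<lambda>X. TL m (S (Phi m M X))) A $$ (i,k) = ampl M M j S Y $$ (i,k)"
    if ik: "i < m*j" "k < m*j" for i k
  proof -
    have "ampl m m j (\<lambda>X. TL m (S (Phi m M X))) A $$ (i,k) = ampl m M j (\<lambda>X. S (Phi m M X)) A $$ (i,k)"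
      using j mM ik by (rule ampl_TL)
    also have "ampl m M j (\<lambda>X. S (Phi m M X)) A = ampl M M j S Y"
      unfolding Y_def using j by (intro ampl_comp[where R="Phi m M", OF linS]) (auto simp: Phi_unit_carrier)
    finally show ?thesis .
  qed
  have "opnorm (ampl m m j (\<lambda>A. TL m (E (T (D (Phi m M A)))) - A) A) \<le> opnorm (ampl M M j S Y)"
    unfolding eq1
  proof (rule opnorm_principal[OF ampl_carrier _ ampl_carrier])
    show "m * j \<le> M * j" using mM by simp
  qed (rule eq2)
  also have "\<dots> \<le> cb_norm M M S" by (rule cb_norm_ge[OF j1 Yc nY])
  finally show "opnorm (ampl m m j (\<lambda>A. TL m (E (T (D (Phi m M A)))) - A) A) \<le> cb_norm M M (\<lambda>A. E (T (D A)) - A)"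
    unfolding S_def .
qed

lemma Delta_set_mem:
  assumes "channel M k2 D" "channel k1 M E"
  shows "cb_norm M M (\<lambda>A. E (T (D A)) - A) \<in> {cb_norm M M (\<lambda>A. E (T (D A)) - A) | E D. channel M k2 D \<and> channel k1 M E}"
  unfolding mem_Collect_eq by (rule exI[of _ E], rule exI[of _ D]) (intro conjI refl assms)

lemma Delta_set_ne:
  assumes "0 < M" "0 < k1"
  shows "{cb_norm M M (\<lambda>A. E (T (D A)) - A) | E D. channel M k2 D \<and> channel k1 M E} \<noteq> {}"
proof
  assume e: "{cb_norm M M (\<lambda>A. E (T (D A)) - A) | E D. channel M k2 D \<and> channel k1 M E} = {}"
  show False using Delta_set_mem[OF channel_triv[OF assms(1), of k2] channel_triv[OF assms(2), of M], of T] unfolding e by (simp only: empty_iff)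
qed

lemma Delta_set_bdd:
  "bdd_below {cb_norm M M (\<lambda>A. E (T (D A)) - A) | E D. channel M k2 D \<and> channel k1 M E}"
proof (rule bdd_belowI)
  fix x assume "x \<in> {cb_norm M M (\<lambda>A. E (T (D A)) - A) | E D. channel M k2 D \<and> channel k1 M E}"
  then have "\<exists>E D. x = cb_norm M M (\<lambda>A. E (T (D A)) - A) \<and> channel M k2 D \<and> channel k1 M E" by (simp only: mem_Collect_eq)
  then obtain E D where "x = cb_norm M M (\<lambda>A. E (T (D A)) - A)" by (elim exE conjE)
  then show "0 \<le> x" using cb_norm_nonneg by simp
qed

lemma Delta_nonneg:
  assumes "0 < M" "0 < k1"
  shows "0 \<le> Delta k2 k1 T M"
  unfolding Delta_def
proof (rule cInf_greatest[OF Delta_set_ne[OF assms]])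
  fix x assume "x \<in> {cb_norm M M (\<lambda>A. E (T (D A)) - A) | E D. channel M k2 D \<and> channel k1 M E}"
  then have "\<exists>E D. x = cb_norm M M (\<lambda>A. E (T (D A)) - A) \<and> channel M k2 D \<and> channel k1 M E" by (simp only: mem_Collect_eq)
  then obtain E D where "x = cb_norm M M (\<lambda>A. E (T (D A)) - A)" by (elim exE conjE)
  then show "0 \<le> x" using cb_norm_nonneg by simp
qed

lemma Delta_mono:
  assumes T: "lin_map k2 k1 T" and k1: "0 < k1" and m: "0 < m" and mM: "m \<le> M"
  shows "Delta k2 k1 T m \<le> Delta k2 k1 T M"
  unfolding Delta_def
proof (rule cInf_mono[OF Delta_set_ne Delta_set_bdd])
  show "0 < M" using m mM by simp
  show "0 < k1" by (rule k1)
  fix b assume "b \<in> {cb_norm M M (\<lambda>A. E (T (D A)) - A) | E D. channel M k2 D \<and> channel k1 M E}"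
  then have "\<exists>E D. b = cb_norm M M (\<lambda>A. E (T (D A)) - A) \<and> channel M k2 D \<and> channel k1 M E" by (simp only: mem_Collect_eq)
  then obtain E D where b: "b = cb_norm M M (\<lambda>A. E (T (D A)) - A)" and D: "channel M k2 D" and E: "channel k1 M E"
    by (elim exE conjE)
  have mem: "cb_norm m m (\<lambda>A. TL m (E (T (D (Phi m M A)))) - A)
     \<in> {cb_norm m m (\<lambda>A. E (T (D A)) - A) | E D. channel m k2 D \<and> channel k1 m E}"
    using Delta_set_mem[OF channel_D'[OF D m mM] channel_E'[OF E mM], of T] .
  show "\<exists>a\<in>{cb_norm m m (\<lambda>A. E (T (D A)) - A) | E D. channel m k2 D \<and> channel k1 m E}. a \<le> b"
    using cb_compare[OF T D E m mM] unfolding b by (intro bexI[OF _ mem])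
qed

lemma lin_tensor: "lin_map (a*b) (a'*b') (tensor_map a b a' b' S1 S2)"
  unfolding lin_map_def
proof (intro conjI ballI allI)
  fix A :: "complex mat" assume A: "A \<in> carrier_mat (a*b) (a*b)"
  show "tensor_map a b a' b' S1 S2 A \<in> carrier_mat (a'*b') (a'*b')" by (simp add: tensor_map_def carrier_matI)
  fix c show "tensor_map a b a' b' S1 S2 (c \<cdot>\<^sub>m A) = c \<cdot>\<^sub>m tensor_map a b a' b' S1 S2 A"
  proof (rule eq_matI)
    fix i k assume "i < dim_row (c \<cdot>\<^sub>m tensor_map a b a' b' S1 S2 A)" "k < dim_col (c \<cdot>\<^sub>m tensor_map a b a' b' S1 S2 A)"
    then have ik: "i < a'*b'" "k < a'*b'" by (simp_all add: tensor_map_def)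
    show "tensor_map a b a' b' S1 S2 (c \<cdot>\<^sub>m A) $$ (i,k) = (c \<cdot>\<^sub>m tensor_map a b a' b' S1 S2 A) $$ (i,k)"
      using ik A by (simp add: tensor_map_def sum_distrib_left) (intro sum.cong refl, simp add: blk_lt)
  qed (simp_all add: tensor_map_def)
next
  fix A B :: "complex mat" assume A: "A \<in> carrier_mat (a*b) (a*b)" and B: "B \<in> carrier_mat (a*b) (a*b)"
  show "tensor_map a b a' b' S1 S2 (A + B) = tensor_map a b a' b' S1 S2 A + tensor_map a b a' b' S1 S2 B"
  proof (rule eq_matI)
    fix i k assume "i < dim_row (tensor_map a b a' b' S1 S2 A + tensor_map a b a' b' S1 S2 B)"
      "k < dim_col (tensor_map a b a' b' S1 S2 A + tensor_map a b a' b' S1 S2 B)"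
    then have ik: "i < a'*b'" "k < a'*b'" by (simp_all add: tensor_map_def)
    show "tensor_map a b a' b' S1 S2 (A + B) $$ (i,k) = (tensor_map a b a' b' S1 S2 A + tensor_map a b a' b' S1 S2 B) $$ (i,k)"
      using ik A B by (simp add: tensor_map_def sum.distrib[symmetric]) (intro sum.cong refl, simp add: blk_lt distrib_right)
  qed (simp_all add: tensor_map_def)
qed

lemma lin_id: "lin_map n n (\<lambda>A. A)"
  unfolding lin_map_def by simp

lemma lin_tpow: "lin_map (d2 ^ n) (d1 ^ n) (tpow d2 d1 T n)"
proof (cases n)
  case 0 then show ?thesis by (simp add: lin_id)
next
  case (Suc k)
  then show ?thesis using lin_tensor[of d2 "d2^k" d1 "d1^k" T "tpow d2 d1 T k"] by simp
qed

lemma g_pos: "1 \<le> (2::nat) ^ k" by simp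

lemma g_le_f:
  fixes c :: real assumes c: "0 \<le> c"
  shows "(2::nat) ^ nat \<lfloor>c * real n\<rfloor> \<le> nat \<lfloor>2 powr (c * real n)\<rfloor>"
proof -
  define k where "k = nat \<lfloor>c * real n\<rfloor>"
  have cn: "0 \<le> c * real n" using c by simp
  have "real k = real_of_int \<lfloor>c * real n\<rfloor>" unfolding k_def using cn by simp
  also have "\<dots> \<le> c * real n" by (rule of_int_floor_le)
  finally have kle: "real k \<le> c * real n" .
  have "real ((2::nat) ^ k) = 2 powr real k" by (simp add: powr_realpow)
  also have "\<dots> \<le> 2 powr (c * real n)" using kle by (intro powr_mono) auto
  finally have "real ((2::nat) ^ k) \<le> 2 powr (c * real n)" .
  then have "int ((2::nat) ^ k) \<le> \<lfloor>2 powr (c * real n)\<rfloor>" by (simp add: le_floor_iff)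
  then show ?thesis unfolding k_def by linarith
qed

lemma f_le_g:
  fixes c c' :: real
  assumes c: "0 \<le> c" and le: "c' * real n \<le> real_of_int \<lfloor>c * real n\<rfloor>"
  shows "nat \<lfloor>2 powr (c' * real n)\<rfloor> \<le> (2::nat) ^ nat \<lfloor>c * real n\<rfloor>"
proof -
  define k where "k = nat \<lfloor>c * real n\<rfloor>"
  have cn: "0 \<le> c * real n" using c by simp
  have "real_of_int \<lfloor>c * real n\<rfloor> = real k" unfolding k_def using cn by simp
  then have le': "c' * real n \<le> real k" using le by simp
  have "2 powr (c' * real n) \<le> 2 powr real k" using le' by (intro powr_mono) auto
  also have "\<dots> = real ((2::nat) ^ k)" by (simp add: powr_realpow)
  finally have "\<lfloor>2 powr (c' * real n)\<rfloor> \<le> \<lfloor>real ((2::nat) ^ k)\<rfloor>" by (rule floor_mono)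
  then have "\<lfloor>2 powr (c' * real n)\<rfloor> \<le> int ((2::nat) ^ k)" by simp
  then show ?thesis unfolding k_def by linarith
qed

lemma f_pos:
  fixes c :: real assumes "0 \<le> c" shows "1 \<le> nat \<lfloor>2 powr (c * real n)\<rfloor>"
proof -
  have "1 \<le> 2 powr (c * real n)" using assms by (intro ge_one_powr_ge_zero) auto
  then have "1 \<le> \<lfloor>2 powr (c * real n)\<rfloor>" by (simp add: le_floor_iff)
  then show ?thesis by linarith
qed

lemma ev_f_le_g:
  fixes c c' :: real
  assumes c': "0 \<le> c'" and cc: "c' < c"
  shows "\<forall>\<^sub>F n in sequentially. nat \<lfloor>2 powr (c' * real n)\<rfloor> \<le> (2::nat) ^ nat \<lfloor>c * real n\<rfloor>"
proof -
  obtain N :: nat where N: "1 / (c - c') \<le> real N" using real_arch_simple by blast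
  show ?thesis unfolding eventually_sequentially
  proof (intro exI allI impI)
    fix n assume n: "N \<le> n"
    have pos: "0 < c - c'" using cc by simp
    have "1 / (c - c') \<le> real n" using N n by linarith
    then have "1 \<le> (c - c') * real n" using pos by (simp add: field_simps)
    then have "c' * real n \<le> c * real n - 1" by (simp add: algebra_simps)
    also have "\<dots> \<le> real_of_int \<lfloor>c * real n\<rfloor>" by linarith
    finally show "nat \<lfloor>2 powr (c' * real n)\<rfloor> \<le> 2 ^ nat \<lfloor>c * real n\<rfloor>"
      using c' cc by (intro f_le_g) auto
  qed
qed


lemma delta_nonneg':
  assumes "1 \<le> d1" "0 < M"
  shows "0 \<le> Delta (d2^n) (d1^n) (tpow d2 d1 T n) M"
  using assms by (intro Delta_nonneg) auto

lemma delta_mono':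
  assumes "1 \<le> d1" "0 < m" "m \<le> M"
  shows "Delta (d2^n) (d1^n) (tpow d2 d1 T n) m \<le> Delta (d2^n) (d1^n) (tpow d2 d1 T n) M"
  using assms by (intro Delta_mono[OF lin_tpow]) auto

lemma ach_eps:
  assumes d1: "1 \<le> d1" and ach: "achievable d2 d1 T c" and e: "0 < \<epsilon>"
  shows "eps_achievable d2 d1 T \<epsilon> c"
proof -
  have c: "0 \<le> c" and lim: "(\<lambda>n. Delta (d2 ^ n) (d1 ^ n) (tpow d2 d1 T n) (nat \<lfloor>2 powr (c * real n)\<rfloor>)) \<longlonglongrightarrow> 0"
    using ach unfolding achievable_def by auto
  have ev: "\<forall>\<^sub>F n in sequentially. Delta (d2 ^ n) (d1 ^ n) (tpow d2 d1 T n) (nat \<lfloor>2 powr (c * real n)\<rfloor>) < \<epsilon>"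
    by (rule order_tendstoD(2)[OF lim e])
  have "\<forall>\<^sub>F n in sequentially. Delta (d2 ^ n) (d1 ^ n) (tpow d2 d1 T n) (2 ^ nat \<lfloor>c * real n\<rfloor>) \<le> \<epsilon>"
  proof (rule eventually_mono[OF ev])
    fix n assume "Delta (d2 ^ n) (d1 ^ n) (tpow d2 d1 T n) (nat \<lfloor>2 powr (c * real n)\<rfloor>) < \<epsilon>"
    moreover have "Delta (d2 ^ n) (d1 ^ n) (tpow d2 d1 T n) (2 ^ nat \<lfloor>c * real n\<rfloor>)
        \<le> Delta (d2 ^ n) (d1 ^ n) (tpow d2 d1 T n) (nat \<lfloor>2 powr (c * real n)\<rfloor>)"
      using g_le_f[OF c, of n] by (intro delta_mono'[OF d1]) simp_all
    ultimately show "Delta (d2 ^ n) (d1 ^ n) (tpow d2 d1 T n) (2 ^ nat \<lfloor>c * real n\<rfloor>) \<le> \<epsilon>" by simp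
  qed
  then show ?thesis unfolding eps_achievable_def using c by simp
qed

lemma eps_down:
  assumes d1: "1 \<le> d1" and ea: "eps_achievable d2 d1 T \<epsilon> c" and c': "0 \<le> c'" "c' \<le> c"
  shows "eps_achievable d2 d1 T \<epsilon> c'"
proof -
  have ev: "\<forall>\<^sub>F n in sequentially. Delta (d2 ^ n) (d1 ^ n) (tpow d2 d1 T n) (2 ^ nat \<lfloor>c * real n\<rfloor>) \<le> \<epsilon>"
    using ea unfolding eps_achievable_def by auto
  have "\<forall>\<^sub>F n in sequentially. Delta (d2 ^ n) (d1 ^ n) (tpow d2 d1 T n) (2 ^ nat \<lfloor>c' * real n\<rfloor>) \<le> \<epsilon>"
  proof (rule eventually_mono[OF ev])
    fix n assume h: "Delta (d2 ^ n) (d1 ^ n) (tpow d2 d1 T n) (2 ^ nat \<lfloor>c * real n\<rfloor>) \<le> \<epsilon>"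
    have "c' * real n \<le> c * real n" using c' by (intro mult_right_mono) auto
    then have "nat \<lfloor>c' * real n\<rfloor> \<le> nat \<lfloor>c * real n\<rfloor>" by (intro nat_mono floor_mono)
    then have "(2::nat) ^ nat \<lfloor>c' * real n\<rfloor> \<le> 2 ^ nat \<lfloor>c * real n\<rfloor>" by (rule power_increasing) simp
    then have "Delta (d2 ^ n) (d1 ^ n) (tpow d2 d1 T n) (2 ^ nat \<lfloor>c' * real n\<rfloor>)
        \<le> Delta (d2 ^ n) (d1 ^ n) (tpow d2 d1 T n) (2 ^ nat \<lfloor>c * real n\<rfloor>)"
      by (intro delta_mono'[OF d1]) simp_all
    then show "Delta (d2 ^ n) (d1 ^ n) (tpow d2 d1 T n) (2 ^ nat \<lfloor>c' * real n\<rfloor>) \<le> \<epsilon>" using h by simp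
  qed
  then show ?thesis unfolding eps_achievable_def using c' by simp
qed

lemma eps_all_ach:
  assumes d1: "1 \<le> d1" and all: "\<And>\<epsilon>. 0 < \<epsilon> \<Longrightarrow> eps_achievable d2 d1 T \<epsilon> c" and c': "0 \<le> c'"
    and evfg: "\<forall>\<^sub>F n in sequentially. nat \<lfloor>2 powr (c' * real n)\<rfloor> \<le> (2::nat) ^ nat \<lfloor>c * real n\<rfloor>"
  shows "achievable d2 d1 T c'"
  unfolding achievable_def
proof (intro conjI c' order_tendstoI)
  fix a :: real assume a: "a < 0"
  show "\<forall>\<^sub>F n in sequentially. a < Delta (d2 ^ n) (d1 ^ n) (tpow d2 d1 T n) (nat \<lfloor>2 powr (c' * real n)\<rfloor>)"
  proof (rule always_eventually, rule allI)
    fix n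
    have "0 \<le> Delta (d2 ^ n) (d1 ^ n) (tpow d2 d1 T n) (nat \<lfloor>2 powr (c' * real n)\<rfloor>)"
      using f_pos[OF c', of n] by (intro delta_nonneg'[OF d1]) linarith
    then show "a < Delta (d2 ^ n) (d1 ^ n) (tpow d2 d1 T n) (nat \<lfloor>2 powr (c' * real n)\<rfloor>)" using a by simp
  qed
next
  fix a :: real assume a: "0 < a"
  have ea: "eps_achievable d2 d1 T (a/2) c" using a by (intro all) simp
  then have ev: "\<forall>\<^sub>F n in sequentially. Delta (d2 ^ n) (d1 ^ n) (tpow d2 d1 T n) (2 ^ nat \<lfloor>c * real n\<rfloor>) \<le> a/2"
    unfolding eps_achievable_def by auto
  show "\<forall>\<^sub>F n in sequentially. Delta (d2 ^ n) (d1 ^ n) (tpow d2 d1 T n) (nat \<lfloor>2 powr (c' * real n)\<rfloor>) < a"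
    using ev evfg
  proof eventually_elim
    case (elim n)
    have "Delta (d2 ^ n) (d1 ^ n) (tpow d2 d1 T n) (nat \<lfloor>2 powr (c' * real n)\<rfloor>)
        \<le> Delta (d2 ^ n) (d1 ^ n) (tpow d2 d1 T n) (2 ^ nat \<lfloor>c * real n\<rfloor>)"
      using f_pos[OF c', of n] elim(2) by (intro delta_mono'[OF d1]) linarith+
    then show ?case using elim(1) a by simp
  qed
qed


lemma Qeps_mono:
  assumes "\<epsilon> \<le> \<epsilon>'"
  shows "Qeps d2 d1 T \<epsilon> \<le> Qeps d2 d1 T \<epsilon>'"
proof -
  have "{c. eps_achievable d2 d1 T \<epsilon> c} \<subseteq> {c. eps_achievable d2 d1 T \<epsilon>' c}"
  proof
    fix c assume "c \<in> {c. eps_achievable d2 d1 T \<epsilon> c}"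
    then have "eps_achievable d2 d1 T \<epsilon> c" by simp
    then have "c \<ge> 0" "\<forall>\<^sub>F n in sequentially. Delta (d2 ^ n) (d1 ^ n) (tpow d2 d1 T n) (2 ^ nat \<lfloor>c * real n\<rfloor>) \<le> \<epsilon>"
      unfolding eps_achievable_def by auto
    then show "c \<in> {c. eps_achievable d2 d1 T \<epsilon>' c}"
      unfolding eps_achievable_def mem_Collect_eq using assms
      by (auto elim: eventually_mono)
  qed
  then show ?thesis unfolding Qeps_def by (intro Sup_subset_mono image_mono)
qed

lemma Qcap_le_Qeps:
  assumes d1: "1 \<le> d1" and e: "0 < \<epsilon>"
  shows "Qcap d2 d1 T \<le> Qeps d2 d1 T \<epsilon>"
proof -
  have "{c. achievable d2 d1 T c} \<subseteq> {c. eps_achievable d2 d1 T \<epsilon> c}"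
    using ach_eps[OF d1 _ e] by blast
  then show ?thesis unfolding Qeps_def Qcap_def by (intro Sup_subset_mono image_mono)
qed

lemma exists_small:
  assumes d1: "1 \<le> d1" and y: "Qcap d2 d1 T < y"
  shows "\<exists>\<epsilon>>0. Qeps d2 d1 T \<epsilon> < y"
proof (rule ccontr)
  assume "\<not> (\<exists>\<epsilon>>0. Qeps d2 d1 T \<epsilon> < y)"
  then have big: "\<And>\<epsilon>. 0 < \<epsilon> \<Longrightarrow> y \<le> Qeps d2 d1 T \<epsilon>" by (meson not_less)
  have zero_all: "eps_achievable d2 d1 T \<epsilon> 0" if e: "0 < \<epsilon>" for \<epsilon>
  proof -
    have "{c. eps_achievable d2 d1 T \<epsilon> c} \<noteq> {}"
    proof
      assume emp: "{c. eps_achievable d2 d1 T \<epsilon> c} = {}"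
      then have "Qeps d2 d1 T \<epsilon> = bot" unfolding Qeps_def by simp
      then have "y \<le> bot" using big[OF e] by simp
      then have "y = bot" by (simp add: bot_unique)
      then show False using y by simp
    qed
    then obtain c where c: "eps_achievable d2 d1 T \<epsilon> c" by blast
    then have "0 \<le> c" unfolding eps_achievable_def by simp
    then show ?thesis using eps_down[OF d1 c] by simp
  qed
  have ach0: "achievable d2 d1 T 0"
  proof (rule eps_all_ach[OF d1 zero_all])
    show "\<forall>\<^sub>F n in sequentially. nat \<lfloor>2 powr (0 * real n)\<rfloor> \<le> (2::nat) ^ nat \<lfloor>0 * real n\<rfloor>" by simp
  qed simp_all
  then have Q0: "ereal 0 \<le> Qcap d2 d1 T" unfolding Qcap_def by (intro Sup_upper) simp
  have "Qcap d2 d1 T \<noteq> \<infinity>" using y by auto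
  then obtain q where q: "Qcap d2 d1 T = ereal q" using Q0 by (cases "Qcap d2 d1 T") auto
  have q0: "0 \<le> q" using Q0 q by simp
  obtain c' c where cc: "q < c'" "c' < c" "ereal c < y"
  proof (cases y)
    case (real r)
    then have "q < r" using y q by simp
    have "q < q + (r - q)/3" "q + (r - q)/3 < q + 2*(r-q)/3" "q + 2*(r-q)/3 < r" using \<open>q < r\<close> by (auto simp: field_simps)
    then show ?thesis using real by (intro that[of "q + (r - q)/3" "q + 2*(r-q)/3"]) auto
  next
    case PInf
    then show ?thesis by (intro that[of "q+1" "q+2"]) auto
  next
    case MInf
    then show ?thesis using y by simp
  qed
  have c_all: "eps_achievable d2 d1 T \<epsilon> c" if e: "0 < \<epsilon>" for \<epsilon>
  proof -
    have "ereal c < Qeps d2 d1 T \<epsilon>" using cc(3) big[OF e] by simp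
    then obtain x where x: "x \<in> ereal ` {c. eps_achievable d2 d1 T \<epsilon> c}" "ereal c < x"
      unfolding Qeps_def less_Sup_iff by blast
    then obtain c0 where c0: "eps_achievable d2 d1 T \<epsilon> c0" "ereal c < ereal c0" by blast
    show ?thesis using eps_down[OF d1 c0(1)] c0(2) cc q0 by simp
  qed
  have "achievable d2 d1 T c'"
    using cc q0 by (intro eps_all_ach[OF d1 c_all] ev_f_le_g) auto
  then have "ereal c' \<le> Qcap d2 d1 T" unfolding Qcap_def by (intro Sup_upper) simp
  then show False using q cc by simp
qed

theorem proposition5:
  fixes d1 d2 :: nat and T :: "complex mat \<Rightarrow> complex mat"
  assumes "d1 \<ge> 1" and "d2 \<ge> 1"
    and "channel d2 d1 T"
  shows "((\<lambda>\<epsilon>. Qeps d2 d1 T \<epsilon>) \<longlongrightarrow> Qcap d2 d1 T) (at_right 0)"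
proof (rule order_tendstoI)
  fix y assume y: "y < Qcap d2 d1 T"
  show "\<forall>\<^sub>F \<epsilon> in at_right 0. y < Qeps d2 d1 T \<epsilon>"
  proof (rule eventually_mono[OF eventually_at_right_less])
    fix \<epsilon> :: real assume "0 < \<epsilon>"
    then show "y < Qeps d2 d1 T \<epsilon>" using Qcap_le_Qeps[OF assms(1)] y by (meson order_less_le_trans)
  qed
next
  fix y assume y: "Qcap d2 d1 T < y"
  obtain \<epsilon>0 where e0: "0 < \<epsilon>0" "Qeps d2 d1 T \<epsilon>0 < y" using exists_small[OF assms(1) y] by blast
  show "\<forall>\<^sub>F \<epsilon> in at_right 0. Qeps d2 d1 T \<epsilon> < y"
    unfolding eventually_at_right_field
  proof (intro exI conjI allI impI)
    show "(0::real) < \<epsilon>0" by (rule e0(1))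
    fix \<epsilon> :: real assume "0 < \<epsilon>" "\<epsilon> < \<epsilon>0"
    then have "Qeps d2 d1 T \<epsilon> \<le> Qeps d2 d1 T \<epsilon>0" by (intro Qeps_mono) simp
    then show "Qeps d2 d1 T \<epsilon> < y" using e0(2) by simp
  qed
qed

end
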